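(* Let $\alpha\in(0,1/2)$ and consider a single obstacle $V^\varepsilon_\alpha$ centered at the origin. Suppose the particle enters $B(0,\varepsilon)$ at time $0$ at position $x^-$ with $|x^-|=\varepsilon$ and velocity $v^-$, $|v^-|=1$, and exits at time $\tau$ with velocity $v^+$. Let $\hat x(s)=x^-+sv^-$ be the unperturbed straight line and $\hat\tau=-2x^-\cdot v^-$ its exit time from $B(0,\varepsilon)$. Set $F^\varepsilon_\alpha=-\nabla V^\varepsilon_\alpha$ and $X_1:=\int_0^{\hat\tau}F^\varepsilon_\alpha(\hat x(s))\,ds$. Then, with constants uniform in the impact parameter, as $\varepsilon\to0$: (i) $|\tau-\hat\tau|=O(\varepsilon^{1+\alpha})$; (ii) $X_1\cdot v^-=0$ and $|X_1|=O(\varepsilon^\alpha)$; (iii) the deflection angle $\theta$ between $v^-$ and $v^+$ satisfies $\theta^2=|X_1|^2+O(\varepsilon^{3\alpha})$; (iv) $v^+-v^-=X_1+X_{21}+O(\varepsilon^{3\alpha})$ where $X_{21}:=\int_0^{\hat\tau}\int_0^s(s-u)\,\nabla F^\varepsilon_\alpha(\hat x(s))F^\varepsilon_\alpha(\hat x(u))\,du\,ds=O(\varepsilon^{2\alpha})$.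
   Context: $V:\mathbb{R}^2\to\mathbb{R}$ is smooth, radial, supported in the closed unit ball; $V^\varepsilon_\alpha(x)=\varepsilon^\alpha V(|x|/\varepsilon)$. The particle moves according to $\dot x=v$, $\dot v=-\nabla V^\varepsilon_\alpha(x)$. *)

theory Defs
  imports "HOL-Analysis.Analysis"
begin

fun iter_dderiv :: "(real^2) list \<Rightarrow> (real^2 \<Rightarrow> real) \<Rightarrow> real^2 \<Rightarrow> real" where
  "iter_dderiv [] f = f"
| "iter_dderiv (h # hs) f = (\<lambda>x. frechet_derivative (iter_dderiv hs f) (at x) h)"

text \<open>Smooth (C-infinity): every iterated directional derivative exists as a
  Frechet-differentiable (hence continuous) function on the whole plane.\<close>
definition smooth2 :: "(real^2 \<Rightarrow> real) \<Rightarrow> bool" where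
  "smooth2 f \<longleftrightarrow> (\<forall>hs x. iter_dderiv hs f differentiable (at x))"

definition radial2 :: "(real^2 \<Rightarrow> real) \<Rightarrow> bool" where
  "radial2 f \<longleftrightarrow> (\<forall>x y. norm x = norm y \<longrightarrow> f x = f y)"

definition grad :: "(real^2 \<Rightarrow> real) \<Rightarrow> real^2 \<Rightarrow> real^2" where
  "grad f x = (SOME D. (f has_derivative (\<lambda>h. D \<bullet> h)) (at x))"

definition Veps :: "(real^2 \<Rightarrow> real) \<Rightarrow> real \<Rightarrow> real \<Rightarrow> real^2 \<Rightarrow> real" where
  "Veps V \<alpha> \<epsilon> x = \<epsilon> powr \<alpha> * V ((1 / \<epsilon>) *\<^sub>R x)"

definition Feps :: "(real^2 \<Rightarrow> real) \<Rightarrow> real \<Rightarrow> real \<Rightarrow> real^2 \<Rightarrow> real^2" where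
  "Feps V \<alpha> \<epsilon> x = - grad (Veps V \<alpha> \<epsilon>) x"

text \<open>Exit time of the free straight line from B(0,eps): -2 x.v\<close>
definition tau_hat :: "real^2 \<Rightarrow> real^2 \<Rightarrow> real" where
  "tau_hat xm vm = - 2 * (xm \<bullet> vm)"

definition X1 :: "(real^2 \<Rightarrow> real) \<Rightarrow> real \<Rightarrow> real \<Rightarrow> real^2 \<Rightarrow> real^2 \<Rightarrow> real^2" where
  "X1 V \<alpha> \<epsilon> xm vm = integral {0..tau_hat xm vm} (\<lambda>s. Feps V \<alpha> \<epsilon> (xm + s *\<^sub>R vm))"

definition X21 :: "(real^2 \<Rightarrow> real) \<Rightarrow> real \<Rightarrow> real \<Rightarrow> real^2 \<Rightarrow> real^2 \<Rightarrow> real^2" where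
  "X21 V \<alpha> \<epsilon> xm vm = integral {0..tau_hat xm vm} (\<lambda>s. integral {0..s} (\<lambda>u.
      (s - u) *\<^sub>R frechet_derivative (Feps V \<alpha> \<epsilon>) (at (xm + s *\<^sub>R vm))
                    (Feps V \<alpha> \<epsilon> (xm + u *\<^sub>R vm))))"

definition vec_angle :: "real^2 \<Rightarrow> real^2 \<Rightarrow> real" where
  "vec_angle a b = arccos ((a \<bullet> b) / (norm a * norm b))"

end

theory Submission
  imports Defs
begin

lemma fd_repr:
  fixes f :: "real^2 \<Rightarrow> real"
  assumes "f differentiable (at x)"
  shows "frechet_derivative f (at x) h = (\<Sum>b\<in>Basis. (h \<bullet> b) * frechet_derivative f (at x) b)"
proof -
  have lin: "linear (frechet_derivative f (at x))"
    using assms frechet_derivative_works has_derivative_linear by blast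
  have "frechet_derivative f (at x) h = frechet_derivative f (at x) (\<Sum>b\<in>Basis. (h \<bullet> b) *\<^sub>R b)"
    by (simp add: euclidean_representation)
  also have "\<dots> = (\<Sum>b\<in>Basis. (h \<bullet> b) * frechet_derivative f (at x) b)"
    using lin by (simp add: linear_sum linear_scale)
  finally show ?thesis .
qed

lemma zero_deriv_open:
  fixes f :: "'a::real_normed_vector \<Rightarrow> 'b::real_normed_vector"
  assumes "f differentiable (at y)" "open S" "y \<in> S" "\<And>z. z \<in> S \<Longrightarrow> f z = 0"
  shows "frechet_derivative f (at y) h = 0"
proof -
  have "(f has_derivative frechet_derivative f (at y)) (at y)"
    using assms(1) frechet_derivative_works by blast
  then have "((\<lambda>_. 0) has_derivative frechet_derivative f (at y)) (at y)"
    by (rule has_derivative_transform_within_open[OF _ assms(2,3)]) (use assms(4) in auto)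
  moreover have "((\<lambda>_. 0::'b) has_derivative (\<lambda>_. 0)) (at y)" by simp
  ultimately have "frechet_derivative f (at y) = (\<lambda>_. 0)" using has_derivative_unique by blast
  then show ?thesis by simp
qed

lemma bdd_cs:
  fixes f :: "real^2 \<Rightarrow> real"
  assumes "continuous_on UNIV f" "\<And>y. norm y > 1 \<Longrightarrow> f y = 0"
  shows "\<exists>B. \<forall>y. \<bar>f y\<bar> \<le> B"
proof -
  have "compact (f ` cball 0 1)"
    by (rule compact_continuous_image) (use assms(1) continuous_on_subset in auto)
  then obtain B where B: "\<And>y. y \<in> cball 0 1 \<Longrightarrow> \<bar>f y\<bar> \<le> B"
    using compact_imp_bounded bounded_iff by (metis image_eqI real_norm_def)
  have "0 \<le> B" using B[of 0] by simp
  show ?thesis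
  proof (intro exI allI)
    fix y show "\<bar>f y\<bar> \<le> B" using B[of y] assms(2)[of y] \<open>0 \<le> B\<close> by (cases "norm y > 1") auto
  qed
qed

lemma mvt_vec:
  fixes f :: "real \<Rightarrow> 'a::real_normed_vector"
  assumes "a \<le> b" "{a..b} \<subseteq> S"
    and "\<And>t. t \<in> {a..b} \<Longrightarrow> (f has_vector_derivative f' t) (at t within S)"
    and "\<And>t. t \<in> {a..b} \<Longrightarrow> norm (f' t) \<le> B"
  shows "norm (f b - f a) \<le> B * (b - a)"
proof -
  have "norm (f b - f a) \<le> B * norm (b - a)"
  proof (rule differentiable_bound[where S="{a..b}" and f'="\<lambda>t h. h *\<^sub>R f' t"])
    show "convex {a..b}" by simp
    fix t assume t: "t \<in> {a..b}"
    show "(f has_derivative (\<lambda>h. h *\<^sub>R f' t)) (at t within {a..b})"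
      using has_vector_derivative_within_subset[OF assms(3)[OF t] assms(2)]
      by (simp add: has_vector_derivative_def)
    show "onorm (\<lambda>h. h *\<^sub>R f' t) \<le> B"
      by (rule onorm_le) (use assms(4)[OF t] in \<open>simp add: mult.commute[of B] mult_left_mono\<close>)
  qed (use assms(1) in auto)
  then show ?thesis using assms(1) by simp
qed

lemma dd_repr_gen:
  fixes f :: "real^2 \<Rightarrow> real"
  assumes "f differentiable (at y)"
  shows "(f has_derivative (\<lambda>h. \<Sum>b\<in>Basis. (h \<bullet> b) * frechet_derivative f (at y) b)) (at y)"
proof -
  have "(f has_derivative frechet_derivative f (at y)) (at y)"
    using assms frechet_derivative_works by blast
  moreover have "frechet_derivative f (at y) = (\<lambda>h. \<Sum>b\<in>Basis. (h \<bullet> b) * frechet_derivative f (at y) b)"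
    by (intro ext) (rule fd_repr[OF assms])
  ultimately show ?thesis by (rule has_derivative_eq_rhs)
qed

lemma grad_eq:
  assumes "(f has_derivative (\<lambda>h. D \<bullet> h)) (at x)"
  shows "grad f x = D"
proof -
  define D' where "D' = grad f x"
  have "(f has_derivative (\<lambda>h. D' \<bullet> h)) (at x)"
    unfolding D'_def grad_def using someI_ex[of "\<lambda>D. (f has_derivative (\<lambda>h. D \<bullet> h)) (at x)"] assms by blast
  then have "(\<lambda>h. D' \<bullet> h) = (\<lambda>h. D \<bullet> h)" using assms has_derivative_unique by blast
  then have "D' \<bullet> (D' - D) = D \<bullet> (D' - D)" by metis
  then have "(D' - D) \<bullet> (D' - D) = 0" by (simp add: inner_diff_left)
  then show ?thesis unfolding D'_def by simp
qed

locale pot =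
  fixes V :: "real^2 \<Rightarrow> real"
  assumes smooth: "smooth2 V" and supp: "\<And>y. norm y > 1 \<Longrightarrow> V y = 0"
begin

declare iter_dderiv.simps[simp del]

lemma dd_diff: "iter_dderiv hs V differentiable (at x)"
  using smooth unfolding smooth2_def by blast

lemma dd_cont: "continuous_on UNIV (iter_dderiv hs V)"
  by (simp add: continuous_at_imp_continuous_on differentiable_imp_continuous_within dd_diff)

lemma dd_deriv: "(iter_dderiv hs V has_derivative (\<lambda>h. \<Sum>b\<in>Basis. (h \<bullet> b) * iter_dderiv (b#hs) V y)) (at y)"
  using dd_repr_gen[OF dd_diff] by (simp add: iter_dderiv.simps)

lemma open_out: "open {z::real^2. 1 < norm z}"
proof -
  have "{z::real^2. 1 < norm z} = - cball 0 1" by auto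
  then show ?thesis by (simp add: open_Compl)
qed

lemma dd_vanish1: "norm y > 1 \<Longrightarrow> iter_dderiv hs V y = 0"
proof (induction hs arbitrary: y)
  case Nil then show ?case using supp by (simp add: iter_dderiv.simps)
next
  case (Cons h hs)
  show ?case
    using zero_deriv_open[OF dd_diff open_out, of y hs h] Cons by (simp add: iter_dderiv.simps)
qed

lemma dd_vanish: "norm y \<ge> 1 \<Longrightarrow> iter_dderiv hs V y = 0"
proof -
  assume y: "norm y \<ge> 1"
  have cl: "closed {z. iter_dderiv hs V z = 0}"
    using continuous_closed_preimage_constant[OF dd_cont closed_UNIV] by simp
  have "- cball 0 1 \<subseteq> {z. iter_dderiv hs V z = 0}" using dd_vanish1 by auto
  then have "closure (- cball 0 1) \<subseteq> {z. iter_dderiv hs V z = 0}" by (rule closure_minimal[OF _ cl])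
  moreover have "closure (- cball (0::real^2) 1) = - ball 0 1" by (simp add: closure_complement)
  ultimately show ?thesis using y by auto
qed

lemma dd_bdd: "\<exists>B. \<forall>y. \<bar>iter_dderiv hs V y\<bar> \<le> B"
  by (rule bdd_cs[OF dd_cont dd_vanish1])

definition Bf where "Bf hs = (SOME B. \<forall>y. \<bar>iter_dderiv hs V y\<bar> \<le> B)"

lemma Bf: "\<bar>iter_dderiv hs V y\<bar> \<le> Bf hs"
  using someI_ex[OF dd_bdd[of hs]] unfolding Bf_def by blast

lemma Bf_nonneg: "0 \<le> Bf hs"
  using Bf[of hs 0] by linarith

definition Lf where "Lf hs = (\<Sum>b\<in>Basis. Bf (b#hs))"

lemma Lf_nonneg: "0 \<le> Lf hs"
  unfolding Lf_def by (simp add: Bf_nonneg sum_nonneg)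

lemma dd_lip: "\<bar>iter_dderiv hs V y - iter_dderiv hs V z\<bar> \<le> Lf hs * norm (y - z)"
proof -
  have "norm (iter_dderiv hs V y - iter_dderiv hs V z) \<le> Lf hs * norm (y - z)"
  proof (rule differentiable_bound[where S=UNIV and f'="\<lambda>y h. \<Sum>b\<in>Basis. (h \<bullet> b) * iter_dderiv (b#hs) V y"])
    fix x :: "real^2"
    show "(iter_dderiv hs V has_derivative (\<lambda>h. \<Sum>b\<in>Basis. (h \<bullet> b) * iter_dderiv (b#hs) V x)) (at x within UNIV)"
      using dd_deriv by simp
    show "onorm (\<lambda>h. \<Sum>b\<in>Basis. (h \<bullet> b) * iter_dderiv (b#hs) V x) \<le> Lf hs"
    proof (rule onorm_le)
      fix h :: "real^2"
      have "norm (\<Sum>b\<in>Basis. (h \<bullet> b) * iter_dderiv (b#hs) V x) \<le> (\<Sum>b\<in>Basis. norm ((h \<bullet> b) * iter_dderiv (b#hs) V x))"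
        by (rule norm_sum)
      also have "\<dots> \<le> (\<Sum>b\<in>Basis. norm h * Bf (b#hs))"
      proof (rule sum_mono)
        fix b :: "real^2" assume b: "b \<in> Basis"
        have "\<bar>h \<bullet> b\<bar> * \<bar>iter_dderiv (b#hs) V x\<bar> \<le> norm h * Bf (b#hs)"
          by (rule mult_mono[OF Basis_le_norm[OF b] Bf]) auto
        then show "norm ((h \<bullet> b) * iter_dderiv (b#hs) V x) \<le> norm h * Bf (b#hs)"
          by (simp add: abs_mult)
      qed
      also have "\<dots> = Lf hs * norm h" by (simp add: Lf_def sum_distrib_left mult.commute)
      finally show "norm (\<Sum>b\<in>Basis. (h \<bullet> b) * iter_dderiv (b#hs) V x) \<le> Lf hs * norm h" .
    qed
  qed auto
  then show ?thesis by simp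
qed

definition G where "G y = (\<Sum>b\<in>Basis. iter_dderiv [b] V y *\<^sub>R b)"
definition DG where "DG y h = (\<Sum>b\<in>Basis. (\<Sum>b2\<in>Basis. (h \<bullet> b2) * iter_dderiv [b2, b] V y) *\<^sub>R b)"

lemma V_deriv: "(V has_derivative (\<lambda>h. G y \<bullet> h)) (at y)"
proof -
  have "(V has_derivative (\<lambda>h. \<Sum>b\<in>Basis. (h \<bullet> b) * iter_dderiv [b] V y)) (at y)"
    using dd_deriv[of "[]"] by (simp add: iter_dderiv.simps)
  moreover have "(\<lambda>h. \<Sum>b\<in>Basis. (h \<bullet> b) * iter_dderiv [b] V y) = (\<lambda>h. G y \<bullet> h)"
    unfolding G_def inner_sum_left by (intro ext sum.cong refl) (simp add: inner_commute)
  ultimately show ?thesis by simp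
qed

lemma G_deriv: "(G has_derivative DG y) (at y)"
proof -
  have "((\<lambda>y. \<Sum>b\<in>Basis. iter_dderiv [b] V y *\<^sub>R b) has_derivative
        (\<lambda>h. \<Sum>b\<in>Basis. (\<Sum>b2\<in>Basis. (h \<bullet> b2) * iter_dderiv [b2, b] V y) *\<^sub>R b)) (at y)"
    by (intro has_derivative_sum has_derivative_scaleR_left dd_deriv)
  moreover have "G = (\<lambda>y. \<Sum>b\<in>Basis. iter_dderiv [b] V y *\<^sub>R b)" by (intro ext) (simp add: G_def)
  moreover have "DG y = (\<lambda>h. \<Sum>b\<in>Basis. (\<Sum>b2\<in>Basis. (h \<bullet> b2) * iter_dderiv [b2, b] V y) *\<^sub>R b)"
    by (intro ext) (simp add: DG_def)
  ultimately show ?thesis by simp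
qed

lemma DG_linear: "linear (DG y)"
  using G_deriv has_derivative_linear by blast

definition B1 where "B1 = (\<Sum>b\<in>Basis. Bf [b])"
definition B2 where "B2 = (\<Sum>b\<in>Basis. \<Sum>b2\<in>Basis. Bf [b2, b])"
definition L3 where "L3 = (\<Sum>b\<in>Basis. \<Sum>b2\<in>Basis. Lf [b2, b])"

lemma B_nonneg: "0 \<le> B1" "0 \<le> B2" "0 \<le> L3"
  unfolding B1_def B2_def L3_def by (auto simp: Bf_nonneg Lf_nonneg intro!: sum_nonneg)

lemma G_bound: "norm (G y) \<le> B1"
proof -
  have "norm (G y) \<le> (\<Sum>b\<in>Basis. norm (iter_dderiv [b] V y *\<^sub>R b))"
    unfolding G_def by (rule norm_sum)
  also have "\<dots> \<le> (\<Sum>b\<in>Basis. Bf [b])"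
    by (rule sum_mono) (simp add: Bf)
  finally show ?thesis by (simp add: B1_def)
qed

lemma DG_bound: "norm (DG y h) \<le> B2 * norm h"
proof -
  have "norm (DG y h) \<le> (\<Sum>b\<in>Basis. norm ((\<Sum>b2\<in>Basis. (h \<bullet> b2) * iter_dderiv [b2, b] V y) *\<^sub>R b))"
    unfolding DG_def by (rule norm_sum)
  also have "\<dots> \<le> (\<Sum>b\<in>Basis. \<Sum>b2\<in>Basis. norm h * Bf [b2, b])"
  proof (rule sum_mono)
    fix b :: "real^2" assume b: "b \<in> Basis"
    have "norm ((\<Sum>b2\<in>Basis. (h \<bullet> b2) * iter_dderiv [b2, b] V y) *\<^sub>R b)
        = \<bar>\<Sum>b2\<in>Basis. (h \<bullet> b2) * iter_dderiv [b2, b] V y\<bar>" using b by simp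
    also have "\<dots> \<le> (\<Sum>b2\<in>Basis. \<bar>(h \<bullet> b2) * iter_dderiv [b2, b] V y\<bar>)" by (rule sum_abs)
    also have "\<dots> \<le> (\<Sum>b2\<in>Basis. norm h * Bf [b2, b])"
    proof (rule sum_mono)
      fix b2 :: "real^2" assume b2: "b2 \<in> Basis"
      show "\<bar>(h \<bullet> b2) * iter_dderiv [b2, b] V y\<bar> \<le> norm h * Bf [b2, b]"
        unfolding abs_mult by (rule mult_mono[OF Basis_le_norm[OF b2] Bf]) auto
    qed
    finally show "norm ((\<Sum>b2\<in>Basis. (h \<bullet> b2) * iter_dderiv [b2, b] V y) *\<^sub>R b) \<le> (\<Sum>b2\<in>Basis. norm h * Bf [b2, b])" .
  qed
  also have "\<dots> = B2 * norm h" by (simp add: B2_def sum_distrib_left sum_distrib_right mult.commute)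
  finally show ?thesis .
qed

lemma DG_lip: "norm (DG y h - DG z h) \<le> L3 * norm (y - z) * norm h"
proof -
  have eq: "DG y h - DG z h = (\<Sum>b\<in>Basis. (\<Sum>b2\<in>Basis. (h \<bullet> b2) * (iter_dderiv [b2, b] V y - iter_dderiv [b2, b] V z)) *\<^sub>R b)"
    by (simp add: DG_def right_diff_distrib sum_subtractf scaleR_diff_left)
  have "norm (DG y h - DG z h) \<le> (\<Sum>b\<in>Basis. norm ((\<Sum>b2\<in>Basis. (h \<bullet> b2) * (iter_dderiv [b2, b] V y - iter_dderiv [b2, b] V z)) *\<^sub>R b))"
    unfolding eq by (rule norm_sum)
  also have "\<dots> \<le> (\<Sum>b\<in>Basis. \<Sum>b2\<in>Basis. norm h * (Lf [b2, b] * norm (y - z)))"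
  proof (rule sum_mono)
    fix b :: "real^2" assume b: "b \<in> Basis"
    have "norm ((\<Sum>b2\<in>Basis. (h \<bullet> b2) * (iter_dderiv [b2, b] V y - iter_dderiv [b2, b] V z)) *\<^sub>R b)
        = \<bar>\<Sum>b2\<in>Basis. (h \<bullet> b2) * (iter_dderiv [b2, b] V y - iter_dderiv [b2, b] V z)\<bar>" using b by simp
    also have "\<dots> \<le> (\<Sum>b2\<in>Basis. \<bar>(h \<bullet> b2) * (iter_dderiv [b2, b] V y - iter_dderiv [b2, b] V z)\<bar>)" by (rule sum_abs)
    also have "\<dots> \<le> (\<Sum>b2\<in>Basis. norm h * (Lf [b2, b] * norm (y - z)))"
    proof (rule sum_mono)
      fix b2 :: "real^2" assume b2: "b2 \<in> Basis"
      show "\<bar>(h \<bullet> b2) * (iter_dderiv [b2, b] V y - iter_dderiv [b2, b] V z)\<bar> \<le> norm h * (Lf [b2, b] * norm (y - z))"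
        unfolding abs_mult by (rule mult_mono[OF Basis_le_norm[OF b2] dd_lip]) auto
    qed
    finally show "norm ((\<Sum>b2\<in>Basis. (h \<bullet> b2) * (iter_dderiv [b2, b] V y - iter_dderiv [b2, b] V z)) *\<^sub>R b) \<le> (\<Sum>b2\<in>Basis. norm h * (Lf [b2, b] * norm (y - z)))" .
  qed
  also have "\<dots> = L3 * norm (y - z) * norm h"
    by (simp add: L3_def sum_distrib_left sum_distrib_right mult_ac)
  finally show ?thesis .
qed

lemma G_taylor: "norm (G y - G z - DG z (y - z)) \<le> L3 * (norm (y - z))\<^sup>2"
proof -
  have "norm (G y - G z - DG z (y - z)) \<le> norm (y - z) * (L3 * norm (y - z))"
  proof (rule differentiable_bound_linearization[where S="closed_segment z y" and f=G and f'=DG])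
    fix t :: real assume "t \<in> {0..1}"
    then show "z + t *\<^sub>R (y - z) \<in> closed_segment z y"
      unfolding closed_segment_def by (auto intro!: exI[of _ t] simp: algebra_simps)
  next
    fix x assume "x \<in> closed_segment z y"
    show "(G has_derivative DG x) (at x within closed_segment z y)"
      using G_deriv by (rule has_derivative_at_withinI)
  next
    fix x assume x: "x \<in> closed_segment z y"
    show "onorm (DG x - DG z) \<le> L3 * norm (y - z)"
    proof (rule onorm_le)
      fix h
      have "norm ((DG x - DG z) h) \<le> L3 * norm (x - z) * norm h" using DG_lip by simp
      also have "\<dots> \<le> L3 * norm (y - z) * norm h"
        using segment_bound(1)[OF x] B_nonneg by (intro mult_right_mono mult_left_mono) auto
      finally show "norm ((DG x - DG z) h) \<le> L3 * norm (y - z) * norm h" .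
    qed
  qed auto
  then show ?thesis by (simp add: power2_eq_square mult_ac)
qed

lemma G_vanish: "norm y \<ge> 1 \<Longrightarrow> G y = 0"
  by (simp add: G_def dd_vanish)

lemma DG_vanish: "norm y \<ge> 1 \<Longrightarrow> DG y h = 0"
  by (simp add: DG_def dd_vanish)

end

context pot begin

definition Fe where "Fe a e y = - ((e powr a / e) *\<^sub>R G ((1/e) *\<^sub>R y))"
definition DFe where "DFe a e y h = - ((e powr a / e^2) *\<^sub>R DG ((1/e) *\<^sub>R y) h)"

lemma scale_deriv: "((\<lambda>x::real^2. (1/e) *\<^sub>R x) has_derivative (\<lambda>h. (1/e) *\<^sub>R h)) (at y)"
  by (auto intro!: derivative_eq_intros)

lemma Veps_deriv:
  assumes "0 < e"
  shows "(Veps V a e has_derivative (\<lambda>h. ((e powr a / e) *\<^sub>R G ((1/e) *\<^sub>R y)) \<bullet> h)) (at y)"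
proof -
  have 2: "((\<lambda>x. V ((1/e) *\<^sub>R x)) has_derivative (\<lambda>h. G ((1/e) *\<^sub>R y) \<bullet> ((1/e) *\<^sub>R h))) (at y)"
    using has_derivative_compose[OF scale_deriv V_deriv] .
  have 3: "((\<lambda>x. e powr a * V ((1/e) *\<^sub>R x)) has_derivative (\<lambda>h. e powr a * (G ((1/e) *\<^sub>R y) \<bullet> ((1/e) *\<^sub>R h)))) (at y)"
    using has_derivative_mult_right[OF 2] .
  have "Veps V a e = (\<lambda>x. e powr a * V ((1/e) *\<^sub>R x))" by (intro ext) (simp add: Veps_def)
  moreover have "(\<lambda>h. e powr a * (G ((1/e) *\<^sub>R y) \<bullet> ((1/e) *\<^sub>R h))) = (\<lambda>h. ((e powr a / e) *\<^sub>R G ((1/e) *\<^sub>R y)) \<bullet> h)"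
    by (intro ext) simp
  ultimately show ?thesis using 3 by simp
qed

lemma Feps_eq: "0 < e \<Longrightarrow> Feps V a e y = Fe a e y"
  by (simp add: Feps_def Fe_def grad_eq[OF Veps_deriv])

lemma Feps_eq': "0 < e \<Longrightarrow> Feps V a e = Fe a e"
  by (intro ext) (simp add: Feps_eq)

lemma Fe_deriv: "(Fe a e has_derivative DFe a e y) (at y)"
proof -
  have 2: "((\<lambda>x. G ((1/e) *\<^sub>R x)) has_derivative (\<lambda>h. DG ((1/e) *\<^sub>R y) ((1/e) *\<^sub>R h))) (at y)"
    using has_derivative_compose[OF scale_deriv G_deriv] .
  have 3: "((\<lambda>x. - ((e powr a / e) *\<^sub>R G ((1/e) *\<^sub>R x))) has_derivative (\<lambda>h. - ((e powr a / e) *\<^sub>R DG ((1/e) *\<^sub>R y) ((1/e) *\<^sub>R h)))) (at y)"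
    using has_derivative_minus[OF has_derivative_scaleR_right[OF 2]] .
  have "Fe a e = (\<lambda>x. - ((e powr a / e) *\<^sub>R G ((1/e) *\<^sub>R x)))" by (intro ext) (simp add: Fe_def)
  moreover have "(\<lambda>h. - ((e powr a / e) *\<^sub>R DG ((1/e) *\<^sub>R y) ((1/e) *\<^sub>R h))) = DFe a e y"
    by (intro ext) (simp add: DFe_def linear_scale[OF DG_linear] power2_eq_square)
  ultimately show ?thesis using 3 by simp
qed

lemma DFe_linear: "linear (DFe a e y)"
  using Fe_deriv has_derivative_linear by blast

lemma frechet_Feps: "0 < e \<Longrightarrow> frechet_derivative (Feps V a e) (at y) = DFe a e y"
  using frechet_derivative_at[OF Fe_deriv] Feps_eq' by simp

lemma Fe_bound: "0 < e \<Longrightarrow> norm (Fe a e y) \<le> B1 * (e powr a) / e"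
proof -
  assume e: "0 < e"
  have "norm (Fe a e y) = (e powr a / e) * norm (G ((1/e) *\<^sub>R y))" using e by (simp add: Fe_def)
  also have "\<dots> \<le> (e powr a / e) * B1" using e by (intro mult_left_mono G_bound) auto
  finally show ?thesis by (simp add: mult_ac)
qed

lemma DFe_bound: "0 < e \<Longrightarrow> norm (DFe a e y h) \<le> B2 * (e powr a) / e^2 * norm h"
proof -
  assume e: "0 < e"
  have "norm (DFe a e y h) = (e powr a / e^2) * norm (DG ((1/e) *\<^sub>R y) h)" using e by (simp add: DFe_def)
  also have "\<dots> \<le> (e powr a / e^2) * (B2 * norm h)" using e by (intro mult_left_mono DG_bound) auto
  finally show ?thesis by (simp add: mult_ac)
qed

lemma DFe_lip: "0 < e \<Longrightarrow> norm (DFe a e y h - DFe a e z h) \<le> L3 * (e powr a) / e^3 * norm (y - z) * norm h"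
proof -
  assume e: "0 < e"
  have "DFe a e y h - DFe a e z h = - ((e powr a / e^2) *\<^sub>R (DG ((1/e) *\<^sub>R y) h - DG ((1/e) *\<^sub>R z) h))"
    by (simp add: DFe_def scaleR_diff_right)
  then have "norm (DFe a e y h - DFe a e z h) = (e powr a / e^2) * norm (DG ((1/e) *\<^sub>R y) h - DG ((1/e) *\<^sub>R z) h)"
    using e by simp
  also have "\<dots> \<le> (e powr a / e^2) * (L3 * norm ((1/e) *\<^sub>R y - (1/e) *\<^sub>R z) * norm h)"
    using e by (intro mult_left_mono DG_lip) auto
  also have "norm ((1/e) *\<^sub>R y - (1/e) *\<^sub>R z) = norm (y - z) / e"
    using e by (simp flip: scaleR_diff_right)
  finally show ?thesis using e by (simp add: power2_eq_square power3_eq_cube field_simps)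
qed

lemma Fe_taylor: "0 < e \<Longrightarrow> norm (Fe a e y - Fe a e z - DFe a e z (y - z)) \<le> L3 * (e powr a) / e^3 * (norm (y - z))\<^sup>2"
proof -
  assume e: "0 < e"
  let ?s = "\<lambda>w. (1/e) *\<^sub>R w"
  have lin: "DG (?s z) (?s y - ?s z) = (1/e) *\<^sub>R DG (?s z) (y - z)"
    by (simp add: linear_scale[OF DG_linear] flip: scaleR_diff_right)
  have "Fe a e y - Fe a e z - DFe a e z (y - z) = - ((e powr a / e) *\<^sub>R (G (?s y) - G (?s z) - DG (?s z) (?s y - ?s z)))"
    unfolding lin by (simp add: Fe_def DFe_def scaleR_diff_right power2_eq_square)
  then have "norm (Fe a e y - Fe a e z - DFe a e z (y - z)) = (e powr a / e) * norm (G (?s y) - G (?s z) - DG (?s z) (?s y - ?s z))"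
    using e by simp
  also have "\<dots> \<le> (e powr a / e) * (L3 * (norm (?s y - ?s z))\<^sup>2)"
    using e by (intro mult_left_mono G_taylor) auto
  also have "norm (?s y - ?s z) = norm (y - z) / e"
    using e by (simp flip: scaleR_diff_right)
  finally show ?thesis using e by (simp add: power2_eq_square power3_eq_cube field_simps)
qed

lemma Fe_vanish: "0 < e \<Longrightarrow> norm y \<ge> e \<Longrightarrow> Fe a e y = 0"
  by (simp add: Fe_def G_vanish)

lemma DFe_vanish: "0 < e \<Longrightarrow> norm y \<ge> e \<Longrightarrow> DFe a e y h = 0"
  by (simp add: DFe_def DG_vanish)

end

lemma F_lip_gen:
  fixes F :: "real^2 \<Rightarrow> real^2"
  assumes "\<And>y. (F has_derivative DF y) (at y)" "\<And>y h. norm (DF y h) \<le> c * norm h"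
  shows "norm (F y - F z) \<le> c * norm (y - z)"
  by (rule differentiable_bound[where S=UNIV and f'=DF])
     (use assms in \<open>auto intro: has_derivative_at_withinI onorm_le\<close>)

locale dyn =
  fixes F :: "real^2 \<Rightarrow> real^2" and DF :: "real^2 \<Rightarrow> real^2 \<Rightarrow> real^2"
    and \<epsilon> k :: real and xm vm :: "real^2" and x v :: "real \<Rightarrow> real^2" and \<tau> :: real
  assumes ep: "0 < \<epsilon>" and kp: "0 < k" and ks: "k \<le> 1/64"
    and FD: "\<And>y. (F has_derivative DF y) (at y)"
    and F1: "\<And>y. norm (F y) \<le> k/\<epsilon>"
    and F2: "\<And>y h. norm (DF y h) \<le> k/\<epsilon>^2 * norm h"
    and F3: "\<And>y z h. norm (DF y h - DF z h) \<le> k/\<epsilon>^3 * norm (y - z) * norm h"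
    and FT: "\<And>y z. norm (F y - F z - DF z (y - z)) \<le> k/\<epsilon>^3 * (norm (y - z))\<^sup>2"
    and F0: "\<And>y. norm y \<ge> \<epsilon> \<Longrightarrow> F y = 0"
    and DF0: "\<And>y h. norm y \<ge> \<epsilon> \<Longrightarrow> DF y h = 0"
    and xm: "norm xm = \<epsilon>" and vm: "norm vm = 1" and tp: "0 < \<tau>"
    and x0: "x 0 = xm" and v0: "v 0 = vm"
    and xd: "\<forall>t\<in>{0..\<tau>}. (x has_vector_derivative v t) (at t within {0..\<tau>})"
    and vd: "\<forall>t\<in>{0..\<tau>}. (v has_vector_derivative F (x t)) (at t within {0..\<tau>})"
    and inside: "\<forall>t\<in>{0<..<\<tau>}. norm (x t) < \<epsilon>"
    and xe: "norm (x \<tau>) = \<epsilon>"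
begin

definition "xh t = xm + t *\<^sub>R vm"
definition "th = - 2 * (xm \<bullet> vm)"

lemma xh_deriv: "(xh has_vector_derivative vm) (at t within S)"
  unfolding xh_def[abs_def] by (auto intro!: derivative_eq_intros)

lemma F_cont: "continuous_on UNIV F"
  using FD has_derivative_continuous continuous_at_imp_continuous_on by blast

lemma fh_cont: "continuous_on S (\<lambda>t. F (xh t))"
  unfolding xh_def by (intro continuous_on_compose2[OF F_cont] continuous_intros) auto

lemma F_lip: "norm (F y - F z) \<le> k/\<epsilon>^2 * norm (y - z)"
  by (rule F_lip_gen[OF FD F2])

lemma xm_vm: "\<bar>xm \<bullet> vm\<bar> \<le> \<epsilon>"
  using Cauchy_Schwarz_ineq2[of xm vm] xm vm by simp

lemma eta_bound: "t \<in> {0..\<tau>} \<Longrightarrow> norm (v t - vm) \<le> k/\<epsilon> * t"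
  using mvt_vec[of 0 t "{0..\<tau>}" v "\<lambda>s. F (x s)" "k/\<epsilon>"] xd vd F1 v0 by auto

lemma del_bound: "t \<in> {0..\<tau>} \<Longrightarrow> norm (x t - xh t) \<le> k/\<epsilon> * t^2"
proof -
  assume t: "t \<in> {0..\<tau>}"
  have "norm ((x t - xh t) - (x 0 - xh 0)) \<le> (k/\<epsilon> * t) * (t - 0)"
  proof (rule mvt_vec[where S="{0..\<tau>}" and f'="\<lambda>s. v s - vm"])
    fix s assume s: "s \<in> {0..t}"
    then have s': "s \<in> {0..\<tau>}" using t by auto
    show "((\<lambda>s. x s - xh s) has_vector_derivative v s - vm) (at s within {0..\<tau>})"
      using xd s' xh_deriv by (intro has_vector_derivative_diff) auto
    have "norm (v s - vm) \<le> k/\<epsilon> * s" using eta_bound[OF s'] .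
    also have "\<dots> \<le> k/\<epsilon> * t" using s ep kp by (intro mult_left_mono) auto
    finally show "norm (v s - vm) \<le> k/\<epsilon> * t" .
  qed (use t in auto)
  then show ?thesis using x0 by (simp add: xh_def power2_eq_square mult_ac)
qed

lemma x_le: assumes "t \<in> {0..\<tau>}" shows "norm (x t) \<le> \<epsilon>"
proof (cases "t = 0 \<or> t = \<tau>")
  case True then show ?thesis using xe x0 xm by auto
next
  case False then have "t \<in> {0<..<\<tau>}" using assms by auto
  then show ?thesis using bspec[OF inside] by (simp add: less_imp_le)
qed

lemma tau_le: "\<tau> \<le> 4 * \<epsilon>"
proof (rule ccontr)
  assume "\<not> \<tau> \<le> 4 * \<epsilon>"
  then have t: "4 * \<epsilon> \<in> {0<..<\<tau>}" "4 * \<epsilon> \<in> {0..\<tau>}" using ep by auto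
  have d: "norm (x (4*\<epsilon>) - xh (4*\<epsilon>)) \<le> k/\<epsilon> * (4*\<epsilon>)^2" by (rule del_bound[OF t(2)])
  also have "\<dots> = 16 * k * \<epsilon>" using ep by (simp add: power2_eq_square)
  finally have d': "norm (x (4*\<epsilon>) - xh (4*\<epsilon>)) \<le> 16 * k * \<epsilon>" .
  have "\<bar>(x (4*\<epsilon>) - xh (4*\<epsilon>)) \<bullet> vm\<bar> \<le> norm (x (4*\<epsilon>) - xh (4*\<epsilon>))"
    using Cauchy_Schwarz_ineq2[of "x (4*\<epsilon>) - xh (4*\<epsilon>)" vm] vm by simp
  moreover have "xh (4*\<epsilon>) \<bullet> vm = xm \<bullet> vm + 4 * \<epsilon>"
    using vm by (simp add: xh_def inner_add_left inner_commute[of vm vm] power2_norm_eq_inner[symmetric])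
  moreover have "\<bar>x (4*\<epsilon>) \<bullet> vm\<bar> \<le> norm (x (4*\<epsilon>))"
    using Cauchy_Schwarz_ineq2[of "x (4*\<epsilon>)" vm] vm by simp
  moreover have "norm (x (4*\<epsilon>)) < \<epsilon>" using inside t(1) by blast
  moreover have "16 * k * \<epsilon> \<le> \<epsilon> / 4" using ks ep by simp
  ultimately show False using xm_vm d' by (simp add: inner_diff_left)
qed

lemma th_le: "th \<le> 2 * \<epsilon>"
  using xm_vm by (simp add: th_def)

lemma xh_norm2: "(norm (xh t))\<^sup>2 = \<epsilon>^2 + t * (t - th)"
proof -
  have "(norm (xh t))\<^sup>2 = xh t \<bullet> xh t" by (simp add: power2_norm_eq_inner)
  also have "\<dots> = xm \<bullet> xm + 2 * t * (xm \<bullet> vm) + t^2 * (vm \<bullet> vm)"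
    by (simp add: xh_def inner_add_left inner_add_right inner_commute power2_eq_square algebra_simps)
  also have "\<dots> = \<epsilon>^2 + t * (t - th)"
    using xm vm by (simp add: th_def power2_norm_eq_inner[symmetric] algebra_simps power2_eq_square)
  finally show ?thesis .
qed

lemma tau_est0: "\<bar>\<tau> - th\<bar> \<le> 11 * k * \<tau>"
proof -
  define d where "d = x \<tau> - xh \<tau>"
  have T: "\<tau> \<in> {0..\<tau>}" using tp by auto
  have dn: "norm d \<le> k/\<epsilon> * \<tau>^2" unfolding d_def by (rule del_bound[OF T])
  have xhn: "norm (xh \<tau>) \<le> 5 * \<epsilon>"
    using norm_triangle_ineq[of xm "\<tau> *\<^sub>R vm"] xm vm tau_le tp by (simp add: xh_def)
  have "\<epsilon>^2 = (norm (xh \<tau> + d))\<^sup>2" using xe by (simp add: d_def)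
  also have "\<dots> = (norm (xh \<tau>))\<^sup>2 + 2 * (xh \<tau> \<bullet> d) + (norm d)\<^sup>2"
    by (simp add: power2_norm_eq_inner inner_add_left inner_add_right inner_commute[of d "xh \<tau>"])
  finally have eq: "\<tau> * (\<tau> - th) = - (2 * (xh \<tau> \<bullet> d) + (norm d)\<^sup>2)"
    using xh_norm2[of \<tau>] by simp
  have "\<bar>2 * (xh \<tau> \<bullet> d)\<bar> \<le> 2 * (norm (xh \<tau>) * norm d)"
    using Cauchy_Schwarz_ineq2[of "xh \<tau>" d] by simp
  also have "\<dots> \<le> 2 * ((5 * \<epsilon>) * (k/\<epsilon> * \<tau>^2))"
    using xhn dn ep by (intro mult_left_mono mult_mono) auto
  also have "\<dots> = 10 * k * \<tau>^2" using ep by simp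
  finally have a1: "\<bar>2 * (xh \<tau> \<bullet> d)\<bar> \<le> 10 * k * \<tau>^2" .
  have "k/\<epsilon> * \<tau>^2 \<le> k/\<epsilon> * (\<tau> * (4*\<epsilon>))"
    using tau_le tp kp ep by (intro mult_left_mono) (auto simp: power2_eq_square)
  also have "\<dots> = 4 * k * \<tau>" using ep by simp
  finally have dn2: "norm d \<le> 4 * k * \<tau>" using dn by linarith
  have "(norm d)\<^sup>2 \<le> (4 * k * \<tau>)^2" using dn2 by (intro power_mono) auto
  also have "\<dots> = (16 * k) * (k * \<tau>^2)" by (simp add: power2_eq_square)
  also have "\<dots> \<le> 1 * (k * \<tau>^2)" using ks kp by (intro mult_right_mono) auto
  finally have a2: "(norm d)\<^sup>2 \<le> k * \<tau>^2" by simp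
  have "\<bar>\<tau> * (\<tau> - th)\<bar> \<le> 11 * k * \<tau>^2"
    unfolding abs_le_iff using eq a1[unfolded abs_le_iff] a2 zero_le_power2[of "norm d"] by linarith
  then have "\<tau> * \<bar>\<tau> - th\<bar> \<le> 11 * k * \<tau>^2" using tp by (simp add: abs_mult)
  then show ?thesis using tp by (simp add: power2_eq_square)
qed

lemma tau_est: "\<bar>\<tau> - th\<bar> \<le> 44 * k * \<epsilon>"
proof -
  have "11 * k * \<tau> \<le> 11 * k * (4 * \<epsilon>)" using tau_le kp by (intro mult_left_mono) auto
  then show ?thesis using tau_est0 by linarith
qed

lemma th_pos: "0 < th"
proof -
  have "11 * k * \<tau> < \<tau>" using ks tp by simp
  then show ?thesis using tau_est0 by linarith
qed

lemma X1_bound: "norm (integral {0..th} (\<lambda>s. F (xh s))) \<le> 2 * k"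
proof -
  have "norm (integral {0..th} (\<lambda>s. F (xh s))) \<le> k/\<epsilon> * (th - 0)"
    by (rule integral_bound) (use th_pos fh_cont F1 in auto)
  also have "\<dots> \<le> k/\<epsilon> * (2 * \<epsilon>)" using th_le kp ep by (intro mult_left_mono) auto
  finally show ?thesis using ep by simp
qed

end

lemma int_diff_bound:
  fixes f :: "real \<Rightarrow> 'a::banach"
  assumes "0 \<le> a" "0 \<le> b" "continuous_on {0..max a b} f"
    and "\<And>t. min a b \<le> t \<Longrightarrow> t \<le> max a b \<Longrightarrow> norm (f t) \<le> B"
  shows "norm (integral {0..a} f - integral {0..b} f) \<le> B * \<bar>a - b\<bar>"
proof -
  have main: "norm (integral {0..p} f - integral {0..q} f) \<le> B * (q - p)"
    if pq: "0 \<le> p" "p \<le> q" "continuous_on {0..q} f" "\<And>t. p \<le> t \<Longrightarrow> t \<le> q \<Longrightarrow> norm (f t) \<le> B" for p q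
  proof -
    have "integral {0..p} f + integral {p..q} f = integral {0..q} f"
      by (rule Henstock_Kurzweil_Integration.integral_combine) (use pq integrable_continuous_real in auto)
    then have "integral {0..p} f - integral {0..q} f = - integral {p..q} f"
      by (simp add: algebra_simps)
    moreover have "norm (integral {p..q} f) \<le> B * (q - p)"
      by (rule integral_bound) (use pq in \<open>auto intro: continuous_on_subset[OF pq(3)]\<close>)
    ultimately show ?thesis by simp
  qed
  show ?thesis
  proof (cases "a \<le> b")
    case True
    then show ?thesis using main[of a b] assms by auto
  next
    case False
    then have "norm (integral {0..b} f - integral {0..a} f) \<le> B * (a - b)"
      using main[of b a] assms by auto
    then show ?thesis using False by (simp add: norm_minus_commute)
  qed
qed

context dyn begin

definition "Tm = 4 * \<epsilon>"
definition "fh t = F (xh t)"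
definition "I1 t = integral {0..t} fh"
definition "I2 t = integral {0..t} (\<lambda>u. u *\<^sub>R fh u)"
definition "dh t = integral {0..t} (\<lambda>u. (t - u) *\<^sub>R fh u)"

lemma fh_c: "continuous_on S fh"
  unfolding fh_def[abs_def] by (rule fh_cont)

lemma tau_Tm: "\<tau> \<le> Tm" and th_Tm: "th \<le> Tm"
  using tau_le th_le ep by (auto simp: Tm_def)

lemma dh_eq: "dh t = t *\<^sub>R I1 t - I2 t"
proof -
  have i1: "fh integrable_on {0..t}" by (rule integrable_continuous_real[OF fh_c])
  have i2: "(\<lambda>u. u *\<^sub>R fh u) integrable_on {0..t}"
    by (intro integrable_continuous_real continuous_intros fh_c)
  have "dh t = integral {0..t} (\<lambda>u. t *\<^sub>R fh u - u *\<^sub>R fh u)"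
    by (simp add: dh_def scaleR_diff_left)
  also have "\<dots> = integral {0..t} (\<lambda>u. t *\<^sub>R fh u) - integral {0..t} (\<lambda>u. u *\<^sub>R fh u)"
    by (rule integral_diff[OF integrable_cmul[OF i1] i2])
  finally show ?thesis by (simp add: I1_def I2_def)
qed

lemma I1_deriv: "t \<in> {0..Tm} \<Longrightarrow> (I1 has_vector_derivative fh t) (at t within {0..Tm})"
  unfolding I1_def[abs_def] by (rule integral_has_vector_derivative[OF fh_c])

lemma I2_deriv: "t \<in> {0..Tm} \<Longrightarrow> (I2 has_vector_derivative t *\<^sub>R fh t) (at t within {0..Tm})"
  unfolding I2_def[abs_def]
  by (rule integral_has_vector_derivative[of _ _ "\<lambda>u. u *\<^sub>R fh u"]) (auto intro!: continuous_intros fh_c)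

lemma dh_deriv: "t \<in> {0..Tm} \<Longrightarrow> (dh has_vector_derivative I1 t) (at t within {0..Tm})"
proof -
  assume t: "t \<in> {0..Tm}"
  have "((\<lambda>t. t *\<^sub>R I1 t - I2 t) has_vector_derivative (t *\<^sub>R fh t + 1 *\<^sub>R I1 t - t *\<^sub>R fh t)) (at t within {0..Tm})"
    by (intro has_vector_derivative_diff has_vector_derivative_scaleR I1_deriv[OF t] I2_deriv[OF t])
       (auto intro!: derivative_eq_intros)
  moreover have "(\<lambda>t. t *\<^sub>R I1 t - I2 t) = dh" by (intro ext) (simp add: dh_eq)
  ultimately show ?thesis by simp
qed

lemma dh_cont: "continuous_on {0..Tm} dh"
  using dh_deriv has_vector_derivative_continuous continuous_on_eq_continuous_within by blast

lemma dh_bound: "0 \<le> t \<Longrightarrow> norm (dh t) \<le> k/\<epsilon> * t^2"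
proof -
  assume t: "0 \<le> t"
  have "norm (dh t) \<le> (t * (k/\<epsilon>)) * (t - 0)"
    unfolding dh_def
  proof (rule integral_bound)
    show "continuous_on {0..t} (\<lambda>u. (t - u) *\<^sub>R fh u)" by (intro continuous_intros fh_c)
    fix u assume u: "u \<in> {0..t}"
    have "norm ((t - u) *\<^sub>R fh u) = (t - u) * norm (fh u)" using u by simp
    also have "\<dots> \<le> t * (k/\<epsilon>)" using u F1[of "xh u"] t by (intro mult_mono) (auto simp: fh_def)
    finally show "norm ((t - u) *\<^sub>R fh u) \<le> t * (k/\<epsilon>)" .
  qed (use t in auto)
  then show ?thesis by (simp add: power2_eq_square mult_ac)
qed

lemma I1_0: "I1 0 = 0" and dh_0: "dh 0 = 0"
  by (simp_all add: I1_def dh_def)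

lemma w_bound: "t \<in> {0..\<tau>} \<Longrightarrow> norm (v t - vm - I1 t) \<le> 16 * k^2/\<epsilon> * t"
proof -
  assume t: "t \<in> {0..\<tau>}"
  have "norm ((v t - vm - I1 t) - (v 0 - vm - I1 0)) \<le> (16 * k^2/\<epsilon>) * (t - 0)"
  proof (rule mvt_vec[where S="{0..\<tau>}" and f'="\<lambda>s. F (x s) - fh s"])
    fix s assume s: "s \<in> {0..t}"
    then have s': "s \<in> {0..\<tau>}" and s'': "s \<in> {0..Tm}" using t tau_Tm by auto
    have "(I1 has_vector_derivative fh s) (at s within {0..\<tau>})"
      by (rule has_vector_derivative_within_subset[OF I1_deriv[OF s'']]) (use tau_Tm in auto)
    then show "((\<lambda>s. v s - vm - I1 s) has_vector_derivative F (x s) - fh s) (at s within {0..\<tau>})"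
      using vd s' by (auto intro!: derivative_eq_intros)
    have "norm (F (x s) - fh s) \<le> k/\<epsilon>^2 * norm (x s - xh s)" unfolding fh_def by (rule F_lip)
    also have "\<dots> \<le> k/\<epsilon>^2 * (k/\<epsilon> * s^2)" using del_bound[OF s'] kp ep by (intro mult_left_mono) auto
    also have "\<dots> \<le> k/\<epsilon>^2 * (k/\<epsilon> * (4*\<epsilon>)^2)"
      using s' tau_le kp ep by (intro mult_left_mono power_mono) auto
    also have "\<dots> = 16 * k^2/\<epsilon>" using ep by (simp add: power2_eq_square field_simps)
    finally show "norm (F (x s) - fh s) \<le> 16 * k^2/\<epsilon>" .
  qed (use t in auto)
  then show ?thesis using v0 by (simp add: I1_0)
qed

lemma e_bound: "t \<in> {0..\<tau>} \<Longrightarrow> norm (x t - xh t - dh t) \<le> 256 * k^2 * \<epsilon>"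
proof -
  assume t: "t \<in> {0..\<tau>}"
  have "norm ((x t - xh t - dh t) - (x 0 - xh 0 - dh 0)) \<le> (64 * k^2) * (t - 0)"
  proof (rule mvt_vec[where S="{0..\<tau>}" and f'="\<lambda>s. v s - vm - I1 s"])
    fix s assume s: "s \<in> {0..t}"
    then have s': "s \<in> {0..\<tau>}" and s'': "s \<in> {0..Tm}" using t tau_Tm by auto
    have "(dh has_vector_derivative I1 s) (at s within {0..\<tau>})"
      by (rule has_vector_derivative_within_subset[OF dh_deriv[OF s'']]) (use tau_Tm in auto)
    then show "((\<lambda>s. x s - xh s - dh s) has_vector_derivative v s - vm - I1 s) (at s within {0..\<tau>})"
      using xd s' xh_deriv by (auto intro!: has_vector_derivative_diff)
    have "norm (v s - vm - I1 s) \<le> 16 * k^2/\<epsilon> * s" by (rule w_bound[OF s'])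
    also have "\<dots> \<le> 16 * k^2/\<epsilon> * (4 * \<epsilon>)" using s' tau_le kp ep by (intro mult_left_mono) auto
    also have "\<dots> = 64 * k^2" using ep by simp
    finally show "norm (v s - vm - I1 s) \<le> 64 * k^2" .
  qed (use t in auto)
  then have "norm (x t - xh t - dh t) \<le> 64 * k^2 * t" using x0 by (simp add: dh_0 xh_def)
  also have "\<dots> \<le> 64 * k^2 * (4 * \<epsilon>)" using t tau_le by (intro mult_left_mono) auto
  finally show ?thesis by simp
qed

end

context dyn begin

lemma DF_lin: "linear (DF y)"
  using FD has_derivative_linear by blast

lemma DF_bl: "bounded_linear (DF y)"
  using FD has_derivative_bounded_linear by blast

lemma DF_repr: "DF y h = (\<Sum>b\<in>Basis. (h \<bullet> b) *\<^sub>R DF y b)"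
proof -
  have "DF y h = DF y (\<Sum>b\<in>Basis. (h \<bullet> b) *\<^sub>R b)" by (simp add: euclidean_representation)
  also have "\<dots> = (\<Sum>b\<in>Basis. (h \<bullet> b) *\<^sub>R DF y b)"
    using DF_lin by (simp add: linear_sum linear_scale)
  finally show ?thesis .
qed

lemma DFb_cont: "continuous_on UNIV (\<lambda>y. DF y b)"
proof (rule lipschitz_on_continuous_on)
  show "(k/\<epsilon>^3 * norm b)-lipschitz_on UNIV (\<lambda>y. DF y b)"
  proof (rule lipschitz_onI)
    fix y z :: "real^2"
    show "dist (DF y b) (DF z b) \<le> k/\<epsilon>^3 * norm b * dist y z"
      using F3[where y=y and z=z and h=b] by (simp add: dist_norm mult_ac)
  qed (use kp ep in auto)
qed

lemma DF_comp_cont: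
  assumes "continuous_on S g"
  shows "continuous_on S (\<lambda>t. DF (xh t) (g t))"
proof -
  have "continuous_on S (\<lambda>t. \<Sum>b\<in>Basis. (g t \<bullet> b) *\<^sub>R DF (xh t) b)"
  proof (intro continuous_on_sum continuous_intros assms)
    fix b :: "real^2"
    show "continuous_on S (\<lambda>t. DF (xh t) b)"
      unfolding xh_def by (intro continuous_on_compose2[OF DFb_cont] continuous_intros) auto
  qed
  then show ?thesis by (subst DF_repr) simp
qed

definition "gD t = DF (xh t) (dh t)"

lemma gD_cont: "continuous_on {0..Tm} gD"
  unfolding gD_def[abs_def] by (rule DF_comp_cont[OF dh_cont])

lemma z_props: "norm (xh th) = \<epsilon>"
  using xh_norm2[of th] ep norm_ge_zero[of "xh th"] by (simp add: power2_eq_iff)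

lemma xh_diff: "norm (xh t - xh th) = \<bar>t - th\<bar>"
  using vm by (simp add: xh_def flip: scaleR_diff_left)

lemma fh_near: "norm (fh t) \<le> k/\<epsilon>^3 * (t - th)^2"
proof -
  have "fh t = F (xh t) - F (xh th) - DF (xh th) (xh t - xh th)"
    using F0 DF0 z_props by (simp add: fh_def)
  then have "norm (fh t) \<le> k/\<epsilon>^3 * (norm (xh t - xh th))\<^sup>2" using FT by simp
  then show ?thesis using xh_diff by simp
qed

lemma gD_near: "norm (gD t) \<le> k/\<epsilon>^3 * \<bar>t - th\<bar> * norm (dh t)"
proof -
  have "gD t = DF (xh t) (dh t) - DF (xh th) (dh t)"
    using DF0 z_props by (simp add: gD_def)
  then have "norm (gD t) \<le> k/\<epsilon>^3 * norm (xh t - xh th) * norm (dh t)" using F3 by simp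
  then show ?thesis using xh_diff by simp
qed

lemma FTC: "((\<lambda>t. F (x t)) has_integral (v \<tau> - vm)) {0..\<tau>}"
  using fundamental_theorem_of_calculus[of 0 \<tau> v "\<lambda>t. F (x t)"] vd tp v0 by auto

lemma claimA: "norm (v \<tau> - vm - integral {0..\<tau>} fh - integral {0..\<tau>} gD) \<le> 2048 * k^3"
proof -
  have ifh: "fh integrable_on {0..\<tau>}" by (rule integrable_continuous_real[OF fh_c])
  have igD: "gD integrable_on {0..\<tau>}"
    by (rule integrable_continuous_real[OF continuous_on_subset[OF gD_cont]]) (use tau_Tm in auto)
  have HI: "((\<lambda>t. F (x t) - fh t - gD t) has_integral (v \<tau> - vm - integral {0..\<tau>} fh - integral {0..\<tau>} gD)) (cbox 0 \<tau>)"
    using has_integral_diff[OF has_integral_diff[OF FTC integrable_integral[OF ifh]] integrable_integral[OF igD]]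
    by simp
  have "norm (v \<tau> - vm - integral {0..\<tau>} fh - integral {0..\<tau>} gD) \<le> (512 * k^3/\<epsilon>) * Henstock_Kurzweil_Integration.content (cbox 0 \<tau>)"
  proof (rule has_integral_bound[OF _ HI])
    show "0 \<le> 512 * k^3/\<epsilon>" using kp ep by simp
    fix t assume "t \<in> cbox 0 \<tau>"
    then have t: "t \<in> {0..\<tau>}" by simp
    define dl where "dl = x t - xh t"
    define e where "e = dl - dh t"
    have split: "F (x t) - fh t - gD t = (F (x t) - F (xh t) - DF (xh t) dl) + DF (xh t) e"
      unfolding e_def gD_def fh_def using DF_lin[of "xh t"] by (simp add: linear_diff dl_def)
    have dl1: "norm dl \<le> 16 * k * \<epsilon>"
    proof -
      have "norm dl \<le> k/\<epsilon> * t^2" unfolding dl_def by (rule del_bound[OF t])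
      also have "\<dots> \<le> k/\<epsilon> * (4*\<epsilon>)^2" using t tau_le kp ep by (intro mult_left_mono power_mono) auto
      also have "\<dots> = 16 * k * \<epsilon>" using ep by (simp add: power2_eq_square)
      finally show ?thesis .
    qed
    have "norm (F (x t) - F (xh t) - DF (xh t) dl) \<le> k/\<epsilon>^3 * (norm dl)^2"
      using FT[of "x t" "xh t"] by (simp add: dl_def)
    also have "\<dots> \<le> k/\<epsilon>^3 * (16 * k * \<epsilon>)^2" using dl1 kp ep by (intro mult_left_mono power_mono) auto
    also have "\<dots> = 256 * k^3/\<epsilon>" using ep by (simp add: power2_eq_square power3_eq_cube field_simps)
    finally have p1: "norm (F (x t) - F (xh t) - DF (xh t) dl) \<le> 256 * k^3/\<epsilon>" .
    have "norm (DF (xh t) e) \<le> k/\<epsilon>^2 * norm e" by (rule F2)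
    also have "\<dots> \<le> k/\<epsilon>^2 * (256 * k^2 * \<epsilon>)"
      using e_bound[OF t] kp ep by (intro mult_left_mono) (auto simp: e_def dl_def)
    also have "\<dots> = 256 * k^3/\<epsilon>" using ep by (simp add: power2_eq_square power3_eq_cube field_simps)
    finally have p2: "norm (DF (xh t) e) \<le> 256 * k^3/\<epsilon>" .
    show "norm (F (x t) - fh t - gD t) \<le> 512 * k^3/\<epsilon>"
      unfolding split using norm_triangle_ineq[of "F (x t) - F (xh t) - DF (xh t) dl" "DF (xh t) e"] p1 p2 by simp
  qed
  also have "\<dots> = (512 * k^3/\<epsilon>) * \<tau>" using tp by simp
  also have "\<dots> \<le> (512 * k^3/\<epsilon>) * (4 * \<epsilon>)" using tau_le kp ep by (intro mult_left_mono) auto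
  also have "\<dots> = 2048 * k^3" using ep by simp
  finally show ?thesis .
qed

end


lemma k4: "0 \<le> k \<Longrightarrow> k \<le> 1/64 \<Longrightarrow> 0 \<le> c \<Longrightarrow> c * k^4 \<le> (c/64) * (k::real)^3"
proof -
  assume a: "0 \<le> k" "k \<le> 1/64" "0 \<le> c"
  have "c * k^4 = (c * k) * k^3" by (simp add: eval_nat_numeral mult_ac)
  also have "\<dots> \<le> (c/64) * k^3"
  proof (intro mult_right_mono)
    show "c * k \<le> c / 64" using mult_left_mono[OF a(2) a(3)] by simp
  qed (use a in auto)
  finally show ?thesis .
qed

context dyn begin

lemma max_Tm: "max \<tau> th \<le> Tm" using tau_Tm th_Tm by simp

lemma between: "min \<tau> th \<le> t \<Longrightarrow> t \<le> max \<tau> th \<Longrightarrow> \<bar>t - th\<bar> \<le> 44 * k * \<epsilon> \<and> 0 \<le> t \<and> t \<le> Tm"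
  using tau_est th_pos tp max_Tm by (auto simp: abs_le_iff min_def max_def split: if_splits)

lemma claimB: "norm (integral {0..\<tau>} fh - integral {0..th} fh) \<le> 1331 * k^3"
proof -
  have "norm (integral {0..\<tau>} fh - integral {0..th} fh) \<le> (k/\<epsilon>^3 * (44 * k * \<epsilon>)^2) * \<bar>\<tau> - th\<bar>"
  proof (rule int_diff_bound)
    fix t assume "min \<tau> th \<le> t" "t \<le> max \<tau> th"
    then have t: "\<bar>t - th\<bar> \<le> 44 * k * \<epsilon>" using between by blast
    have "norm (fh t) \<le> k/\<epsilon>^3 * (t - th)^2" by (rule fh_near)
    also have "\<dots> \<le> k/\<epsilon>^3 * (44 * k * \<epsilon>)^2"
      using t kp ep by (intro mult_left_mono) (auto simp: power2_le_iff_abs_le)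
    finally show "norm (fh t) \<le> k/\<epsilon>^3 * (44 * k * \<epsilon>)^2" .
  qed (use tp th_pos fh_c in auto)
  also have "\<dots> \<le> (k/\<epsilon>^3 * (44 * k * \<epsilon>)^2) * (44 * k * \<epsilon>)"
    using tau_est kp ep by (intro mult_left_mono) auto
  also have "\<dots> = 85184 * k^4" using ep by (simp add: power2_eq_square power3_eq_cube field_simps eval_nat_numeral)
  also have "\<dots> \<le> (85184/64) * k^3" by (rule k4) (use kp ks in auto)
  finally show ?thesis by simp
qed

end


context dyn begin

lemma claimC: "norm (integral {0..\<tau>} gD - integral {0..th} gD) \<le> 484 * k^3"
proof -
  have "norm (integral {0..\<tau>} gD - integral {0..th} gD) \<le> (k/\<epsilon>^3 * (44 * k * \<epsilon>) * (16 * k * \<epsilon>)) * \<bar>\<tau> - th\<bar>"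
  proof (rule int_diff_bound)
    fix t assume "min \<tau> th \<le> t" "t \<le> max \<tau> th"
    then have t: "\<bar>t - th\<bar> \<le> 44 * k * \<epsilon>" "0 \<le> t" "t \<le> Tm" using between by blast+
    have dh: "norm (dh t) \<le> 16 * k * \<epsilon>"
    proof -
      have "norm (dh t) \<le> k/\<epsilon> * t^2" by (rule dh_bound[OF t(2)])
      also have "\<dots> \<le> k/\<epsilon> * (4 * \<epsilon>)^2" using t kp ep by (intro mult_left_mono power_mono) (auto simp: Tm_def)
      also have "\<dots> = 16 * k * \<epsilon>" using ep by (simp add: power2_eq_square)
      finally show ?thesis .
    qed
    have "norm (gD t) \<le> k/\<epsilon>^3 * \<bar>t - th\<bar> * norm (dh t)" by (rule gD_near)
    also have "\<dots> \<le> k/\<epsilon>^3 * (44 * k * \<epsilon>) * (16 * k * \<epsilon>)"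
      using t dh kp ep by (intro mult_mono mult_left_mono) auto
    finally show "norm (gD t) \<le> k/\<epsilon>^3 * (44 * k * \<epsilon>) * (16 * k * \<epsilon>)" .
  qed (use tp th_pos continuous_on_subset[OF gD_cont] max_Tm in auto)
  also have "\<dots> \<le> (k/\<epsilon>^3 * (44 * k * \<epsilon>) * (16 * k * \<epsilon>)) * (44 * k * \<epsilon>)"
    using tau_est kp ep by (intro mult_left_mono) auto
  also have "\<dots> = 30976 * k^4" using ep by (simp add: power2_eq_square power3_eq_cube field_simps eval_nat_numeral)
  also have "\<dots> \<le> (30976/64) * k^3" by (rule k4) (use kp ks in auto)
  finally show ?thesis by simp
qed

lemma X21_eq: "integral {0..th} (\<lambda>s. integral {0..s} (\<lambda>u. (s - u) *\<^sub>R DF (xm + s *\<^sub>R vm) (F (xm + u *\<^sub>R vm))))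
   = integral {0..th} gD"
proof (rule integral_cong)
  fix s
  have "integral {0..s} (DF (xh s) \<circ> (\<lambda>u. (s - u) *\<^sub>R fh u)) = DF (xh s) (integral {0..s} (\<lambda>u. (s - u) *\<^sub>R fh u))"
    by (rule integral_linear[OF _ DF_bl]) (intro integrable_continuous_real continuous_intros fh_c)
  moreover have "(DF (xh s) \<circ> (\<lambda>u. (s - u) *\<^sub>R fh u)) = (\<lambda>u. (s - u) *\<^sub>R DF (xm + s *\<^sub>R vm) (F (xm + u *\<^sub>R vm)))"
    by (simp add: o_def linear_scale[OF DF_lin] fh_def xh_def)
  ultimately show "integral {0..s} (\<lambda>u. (s - u) *\<^sub>R DF (xm + s *\<^sub>R vm) (F (xm + u *\<^sub>R vm))) = gD s"
    by (simp add: gD_def dh_def)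
qed

lemma X21_bound: "norm (integral {0..th} gD) \<le> 8 * k^2"
proof -
  have "norm (integral {0..th} gD) \<le> (4 * k^2/\<epsilon>) * (th - 0)"
  proof (rule integral_bound)
    show "continuous_on {0..th} gD" by (rule continuous_on_subset[OF gD_cont]) (use th_Tm in auto)
    fix s assume s: "s \<in> {0..th}"
    have "norm (gD s) \<le> k/\<epsilon>^2 * norm (dh s)" unfolding gD_def by (rule F2)
    also have "\<dots> \<le> k/\<epsilon>^2 * (k/\<epsilon> * s^2)" using dh_bound[of s] s kp ep by (intro mult_left_mono) auto
    also have "\<dots> \<le> k/\<epsilon>^2 * (k/\<epsilon> * (2 * \<epsilon>)^2)" using s th_le kp ep by (intro mult_left_mono power_mono) auto
    also have "\<dots> = 4 * k^2/\<epsilon>" using ep by (simp add: power2_eq_square field_simps)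
    finally show "norm (gD s) \<le> 4 * k^2/\<epsilon>" .
  qed (use th_pos in auto)
  also have "\<dots> \<le> (4 * k^2/\<epsilon>) * (2 * \<epsilon>)" using th_le kp ep by (intro mult_left_mono) auto
  also have "\<dots> = 8 * k^2" using ep by simp
  finally show ?thesis .
qed

lemma dyn_main:
  "\<bar>\<tau> - th\<bar> \<le> 44 * k * \<epsilon>
   \<and> norm (integral {0..th} (\<lambda>s. F (xm + s *\<^sub>R vm))) \<le> 2 * k
   \<and> norm (v \<tau> - vm) \<le> 4 * k
   \<and> norm (v \<tau> - vm - integral {0..th} (\<lambda>s. F (xm + s *\<^sub>R vm))
        - integral {0..th} (\<lambda>s. integral {0..s} (\<lambda>u. (s - u) *\<^sub>R DF (xm + s *\<^sub>R vm) (F (xm + u *\<^sub>R vm))))) \<le> 4000 * k^3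
   \<and> norm (integral {0..th} (\<lambda>s. integral {0..s} (\<lambda>u. (s - u) *\<^sub>R DF (xm + s *\<^sub>R vm) (F (xm + u *\<^sub>R vm))))) \<le> 8 * k^2"
proof -
  have X1e: "integral {0..th} (\<lambda>s. F (xm + s *\<^sub>R vm)) = integral {0..th} fh"
    by (simp add: fh_def[abs_def] xh_def)
  have v4: "norm (v \<tau> - vm) \<le> 4 * k"
  proof -
    have "norm (v \<tau> - vm) \<le> k/\<epsilon> * \<tau>" using eta_bound tp by auto
    also have "\<dots> \<le> k/\<epsilon> * (4 * \<epsilon>)" using tau_le kp ep by (intro mult_left_mono) auto
    finally show ?thesis using ep by simp
  qed
  have eqn: "v \<tau> - vm - integral {0..th} fh - integral {0..th} gD
      = (v \<tau> - vm - integral {0..\<tau>} fh - integral {0..\<tau>} gD)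
        + (integral {0..\<tau>} fh - integral {0..th} fh) + (integral {0..\<tau>} gD - integral {0..th} gD)"
    by (simp add: algebra_simps)
  have tri: "norm ((v \<tau> - vm - integral {0..\<tau>} fh - integral {0..\<tau>} gD)
        + (integral {0..\<tau>} fh - integral {0..th} fh) + (integral {0..\<tau>} gD - integral {0..th} gD))
      \<le> norm (v \<tau> - vm - integral {0..\<tau>} fh - integral {0..\<tau>} gD)
        + norm (integral {0..\<tau>} fh - integral {0..th} fh) + norm (integral {0..\<tau>} gD - integral {0..th} gD)"
    by (intro order.trans[OF norm_triangle_ineq] add_right_mono norm_triangle_ineq)
  have "norm (v \<tau> - vm - integral {0..th} fh - integral {0..th} gD) \<le> 2048 * k^3 + 1331 * k^3 + 484 * k^3"
    unfolding eqn using tri claimA claimB claimC by linarith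
  moreover have "3863 * k^3 \<le> 4000 * k^3" using kp by simp
  ultimately have R: "norm (v \<tau> - vm - integral {0..th} fh - integral {0..th} gD) \<le> 4000 * k^3"
    by linarith
  show ?thesis
    unfolding X1e X21_eq using tau_est X1_bound v4 R X21_bound by (simp add: fh_def[abs_def] xh_def[abs_def])
qed

end

lemma sin_lower: fixes y :: real assumes "0 \<le> y" shows "y - y^3/6 \<le> sin y"
proof -
  have M: "\<bar>sin y - (\<Sum>m<3. sin_coeff m * y ^ m)\<bar> \<le> inverse (fact 3) * \<bar>y\<bar> ^ 3"
    by (rule Maclaurin_sin_bound)
  have S: "(\<Sum>m<3. sin_coeff m * y ^ m) = y"
    by (simp add: sin_coeff_def eval_nat_numeral)
  have E: "inverse (fact 3) * \<bar>y\<bar> ^ 3 = y^3/6" using assms by (simp add: fact_numeral)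
  have "\<bar>sin y - y\<bar> \<le> y^3/6" using M unfolding S E .
  then have A: "- (sin y - y) \<le> y^3/6" by (simp only: abs_le_iff)
  have "y - y^3/6 \<le> sin y" using A by (simp add: algebra_simps)
  then show ?thesis .
qed

lemma angle_est:
  fixes u w :: "real^2"
  assumes u: "norm u = 1" and w: "norm w = 1"
  shows "\<bar>(vec_angle u w)\<^sup>2 - (norm (w - u))\<^sup>2\<bar> \<le> 8 * (norm (w - u))^4"
proof -
  define c where "c = u \<bullet> w"
  have c1: "\<bar>c\<bar> \<le> 1" using Cauchy_Schwarz_ineq2[of u w] u w by (simp add: c_def)
  define \<theta> where "\<theta> = arccos c"
  have ang: "vec_angle u w = \<theta>" by (simp add: vec_angle_def \<theta>_def c_def u w)
  have th0: "0 \<le> \<theta>" "\<theta> \<le> pi" using c1 by (auto simp: \<theta>_def intro!: arccos_lbound arccos_ubound)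
  have cth: "cos \<theta> = c" using c1 by (simp add: \<theta>_def)
  have "u \<bullet> u = (norm u)^2" "w \<bullet> w = (norm w)^2" by (simp_all add: power2_norm_eq_inner)
  then have uu: "u \<bullet> u = 1" "w \<bullet> w = 1" using u w by simp_all
  have d2: "(norm (w - u))\<^sup>2 = 2 - 2 * c"
    using uu by (simp add: power2_norm_eq_inner inner_diff_left inner_diff_right inner_commute c_def)
  define y where "y = \<theta> / 2"
  define s where "s = sin y"
  have y0: "0 \<le> y" "y \<le> 2" using th0 pi_less_4 by (auto simp: y_def)
  have "cos \<theta> = 1 - 2 * s^2" using cos_double_sin[of y] by (simp add: s_def y_def)
  then have d2s: "(norm (w - u))\<^sup>2 = 4 * s^2" using d2 cth by simp
  have sy: "s \<le> y" using sin_x_le_x[OF y0(1)] by (simp add: s_def)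
  have s0: "0 \<le> s" using th0 by (auto simp: s_def y_def intro!: sin_ge_zero)
  have sl: "y - y^3/6 \<le> s" using sin_lower[OF y0(1)] by (simp add: s_def)
  have "y^2 \<le> 2^2" using y0 by (intro power_mono) auto
  then have "y * y^2 \<le> y * 4" using y0 by (intro mult_left_mono) auto
  then have "y^3 \<le> 4 * y" by (simp add: eval_nat_numeral mult_ac)
  then have ys: "y \<le> 3 * s" using sl by linarith
  have "(y - s) * (y + s) \<le> (y^3/6) * (2 * y)" using sl sy s0 y0 by (intro mult_mono) auto
  also have "\<dots> = y^4 / 3" by (simp add: eval_nat_numeral)
  also have "\<dots> \<le> (3 * s)^4 / 3" using ys y0 by (intro divide_right_mono power_mono) auto
  finally have k: "(y - s) * (y + s) \<le> 27 * s^4" by (simp add: eval_nat_numeral)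
  have "\<theta>^2 - (norm (w - u))\<^sup>2 = 4 * ((y - s) * (y + s))"
    using d2s by (simp add: y_def power2_eq_square algebra_simps)
  moreover have "0 \<le> (y - s) * (y + s)" using sy s0 by simp
  moreover have "8 * (norm (w - u))^4 = 128 * s^4"
  proof -
    have "(norm (w - u))^4 = ((norm (w - u))\<^sup>2)^2" by simp
    then show ?thesis using d2s by (simp add: power_mult_distrib)
  qed
  ultimately show ?thesis using k ang by simp
qed

lemma angle_combine:
  fixes d X1 X21 :: "real^2" and \<theta> k :: real
  assumes k: "0 \<le> k" "k \<le> 1/64" and d: "norm d \<le> 4*k" and x1: "norm X1 \<le> 2*k"
    and x21: "norm X21 \<le> 8*k^2" and r: "norm (d - X1 - X21) \<le> 4000*k^3"
    and th: "\<bar>\<theta>\<^sup>2 - (norm d)\<^sup>2\<bar> \<le> 8 * (norm d)^4"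
  shows "\<bar>\<theta>\<^sup>2 - (norm X1)\<^sup>2\<bar> \<le> 500 * k^3"
proof -
  have k3: "4000*k^3 \<le> 63 * k^2"
  proof -
    have "4000*k^3 = (4000*k) * k^2" by (simp add: eval_nat_numeral)
    also have "\<dots> \<le> 63 * k^2" using k by (intro mult_right_mono) auto
    finally show ?thesis .
  qed
  have "norm (d - X1) \<le> norm X21 + norm (d - X1 - X21)"
    using norm_triangle_ineq[of X21 "d - X1 - X21"] by simp
  then have a: "norm (d - X1) \<le> 71 * k^2" using x21 r k3 by linarith
  have b: "norm (d + X1) \<le> 6 * k" using norm_triangle_ineq[of d X1] d x1 by linarith
  have "(norm d)\<^sup>2 - (norm X1)\<^sup>2 = (d - X1) \<bullet> (d + X1)"
    by (simp add: power2_norm_eq_inner inner_diff_left inner_add_right inner_commute[of X1 d])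
  then have "\<bar>(norm d)\<^sup>2 - (norm X1)\<^sup>2\<bar> \<le> norm (d - X1) * norm (d + X1)"
    using Cauchy_Schwarz_ineq2 by simp
  also have "\<dots> \<le> (71 * k^2) * (6 * k)" using a b by (intro mult_mono) auto
  also have "\<dots> = 426 * k^3" by (simp add: eval_nat_numeral)
  finally have c: "\<bar>(norm d)\<^sup>2 - (norm X1)\<^sup>2\<bar> \<le> 426 * k^3" .
  have "(norm d)^4 \<le> (4*k)^4" using d by (intro power_mono) auto
  also have "\<dots> = (256 * k) * k^3" by (simp add: eval_nat_numeral)
  also have "\<dots> \<le> 4 * k^3" using k by (intro mult_right_mono) auto
  finally have e: "8 * (norm d)^4 \<le> 32 * k^3" by linarith
  show ?thesis using th c e by linarith
qed

context pot begin

lemma Veps_rad: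
  assumes "radial2 V" "0 < e" "norm y = norm z"
  shows "Veps V a e y = Veps V a e z"
proof -
  have "V ((1/e) *\<^sub>R y) = V ((1/e) *\<^sub>R z)"
    using assms(1)[unfolded radial2_def, rule_format, of "(1/e) *\<^sub>R y" "(1/e) *\<^sub>R z"] assms(3) by simp
  then show ?thesis by (simp add: Veps_def)
qed

lemma Fe_cont: "continuous_on UNIV (Fe a e)"
  by (intro continuous_at_imp_continuous_on ballI has_derivative_continuous[OF Fe_deriv])

lemma energy:
  assumes rad: "radial2 V" and e: "0 < e" and tp: "0 < \<tau>"
    and x0: "x 0 = xm" and v0: "v 0 = vm" and vm: "norm vm = 1"
    and xd: "\<forall>t\<in>{0..\<tau>}. (x has_vector_derivative v t) (at t within {0..\<tau>})"
    and vd: "\<forall>t\<in>{0..\<tau>}. (v has_vector_derivative Feps V a e (x t)) (at t within {0..\<tau>})"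
    and xn: "norm (x \<tau>) = norm xm"
  shows "norm (v \<tau>) = 1"
proof -
  define E where "E t = Veps V a e (x t) + (1/2) * (v t \<bullet> v t)" for t
  have D: "(E has_vector_derivative 0) (at t within {0..\<tau>})" if t: "t \<in> {0..\<tau>}" for t
  proof -
    define g where "g = (e powr a / e) *\<^sub>R G ((1/e) *\<^sub>R x t)"
    have Fx: "Feps V a e (x t) = - g" using e by (simp add: Feps_eq Fe_def g_def)
    have xd': "(x has_derivative (\<lambda>h. h *\<^sub>R v t)) (at t within {0..\<tau>})"
      using xd t by (simp add: has_vector_derivative_def)
    have "(v has_vector_derivative (- g)) (at t within {0..\<tau>})"
      using bspec[OF vd t] unfolding Fx .
    then have vd': "(v has_derivative (\<lambda>h. h *\<^sub>R (- g))) (at t within {0..\<tau>})"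
      unfolding has_vector_derivative_def .
    have A: "((\<lambda>t. Veps V a e (x t)) has_derivative (\<lambda>h. g \<bullet> (h *\<^sub>R v t))) (at t within {0..\<tau>})"
      using has_derivative_compose[OF xd' Veps_deriv[OF e, of a "x t"]] by (simp add: g_def)
    have B: "((\<lambda>t. v t \<bullet> v t) has_derivative (\<lambda>h. v t \<bullet> (h *\<^sub>R (- g)) + (h *\<^sub>R (- g)) \<bullet> v t)) (at t within {0..\<tau>})"
      by (rule has_derivative_inner[OF vd' vd'])
    have "(E has_derivative (\<lambda>h. g \<bullet> (h *\<^sub>R v t) + (1/2) * (v t \<bullet> (h *\<^sub>R (- g)) + (h *\<^sub>R (- g)) \<bullet> v t))) (at t within {0..\<tau>})"
      unfolding E_def[abs_def] by (intro has_derivative_add A has_derivative_mult_right B)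
    moreover have "(\<lambda>h. g \<bullet> (h *\<^sub>R v t) + (1/2) * (v t \<bullet> (h *\<^sub>R (- g)) + (h *\<^sub>R (- g)) \<bullet> v t)) = (\<lambda>h. h *\<^sub>R 0)"
      by (intro ext) (simp add: inner_commute[of "v t" g] algebra_simps)
    ultimately show ?thesis by (simp add: has_vector_derivative_def)
  qed
  have "norm (E \<tau> - E 0) \<le> 0 * (\<tau> - 0)"
    by (rule mvt_vec[where S="{0..\<tau>}" and f'="\<lambda>_. 0"]) (use tp D in auto)
  then have "E \<tau> = E 0" by simp
  moreover have "Veps V a e (x \<tau>) = Veps V a e (x 0)" by (rule Veps_rad[OF rad e]) (simp add: xn x0)
  ultimately have "v \<tau> \<bullet> v \<tau> = vm \<bullet> vm" by (simp add: E_def v0)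
  also have "vm \<bullet> vm = 1" using vm by (simp add: norm_eq_1)
  finally show ?thesis by (simp add: norm_eq_1)
qed

lemma X1_perp:
  assumes rad: "radial2 V" and e: "0 < e" and xm: "norm xm = e" and vm: "norm vm = 1"
  shows "X1 V a e xm vm \<bullet> vm = 0"
proof -
  define th where "th = tau_hat xm vm"
  define xh where "xh s = xm + s *\<^sub>R vm" for s
  have X: "X1 V a e xm vm = integral {0..th} (\<lambda>s. Fe a e (xh s))"
    using e by (simp add: X1_def th_def xh_def Feps_eq)
  show ?thesis
  proof (cases "th > 0")
    case False
    then have "{0..th} = {} \<or> {0..th} = {0}" by auto
    then show ?thesis unfolding X by auto
  next
    case True
    have cont: "continuous_on {0..th} (\<lambda>s. Fe a e (xh s))"
      unfolding xh_def by (intro continuous_on_compose2[OF Fe_cont] continuous_intros) auto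
    have int: "(\<lambda>s. Fe a e (xh s)) integrable_on {0..th}" by (rule integrable_continuous_real[OF cont])
    have lin: "integral {0..th} (\<lambda>s. Fe a e (xh s)) \<bullet> vm = integral {0..th} (\<lambda>s. Fe a e (xh s) \<bullet> vm)"
      using integral_linear[OF int bounded_linear_inner_left[of vm]] by (simp add: o_def)
    have der: "((\<lambda>s. Veps V a e (xh s)) has_vector_derivative (- (Fe a e (xh s) \<bullet> vm))) (at s within {0..th})" for s
    proof -
      have l: "(xh has_derivative (\<lambda>h. h *\<^sub>R vm)) (at s within {0..th})"
        unfolding xh_def[abs_def] by (auto intro!: derivative_eq_intros)
      have "((\<lambda>s. Veps V a e (xh s)) has_derivative (\<lambda>h. ((e powr a / e) *\<^sub>R G ((1/e) *\<^sub>R xh s)) \<bullet> (h *\<^sub>R vm))) (at s within {0..th})"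
        using has_derivative_compose[OF l Veps_deriv[OF e]] .
      moreover have "(\<lambda>h. ((e powr a / e) *\<^sub>R G ((1/e) *\<^sub>R xh s)) \<bullet> (h *\<^sub>R vm)) = (\<lambda>h. h *\<^sub>R (- (Fe a e (xh s) \<bullet> vm)))"
        by (intro ext) (simp add: Fe_def)
      ultimately show ?thesis by (simp add: has_vector_derivative_def)
    qed
    have "((\<lambda>s. - (Fe a e (xh s) \<bullet> vm)) has_integral (Veps V a e (xh th) - Veps V a e (xh 0))) {0..th}"
      by (rule fundamental_theorem_of_calculus) (use True der in auto)
    moreover have "norm (xh th) = norm (xh 0)"
    proof -
      have vv: "vm \<bullet> vm = 1" using vm by (simp add: norm_eq_1)
      have "(norm (xh th))\<^sup>2 = xh th \<bullet> xh th" by (rule power2_norm_eq_inner)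
      also have "\<dots> = xm \<bullet> xm + 2 * th * (xm \<bullet> vm) + th^2 * (vm \<bullet> vm)"
        by (simp add: xh_def inner_add_left inner_add_right inner_commute[of vm xm] power2_eq_square algebra_simps)
      also have "\<dots> = xm \<bullet> xm"
        using vv by (simp add: th_def tau_hat_def power2_eq_square algebra_simps)
      also have "\<dots> = (norm (xh 0))\<^sup>2" by (simp add: xh_def power2_norm_eq_inner)
      finally show ?thesis using power2_eq_iff_nonneg by auto
    qed
    moreover have "Veps V a e (xh th) = Veps V a e (xh 0)" by (rule Veps_rad[OF rad e]) fact
    ultimately have "((\<lambda>s. - (Fe a e (xh s) \<bullet> vm)) has_integral 0) {0..th}"
      by simp
    then have "integral {0..th} (\<lambda>s. Fe a e (xh s) \<bullet> vm) = 0"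
      using integral_unique has_integral_neg_iff by (metis neg_equal_0_iff_equal)
    then show ?thesis using X lin by simp
  qed
qed

end
theorem mainTheorem3:
  fixes V :: "real^2 \<Rightarrow> real" and \<alpha> :: real
  assumes smooth: "smooth2 V"
    and radial: "radial2 V"
    and supp: "\<And>y. norm y > 1 \<Longrightarrow> V y = 0"
    and alpha: "0 < \<alpha>" "\<alpha> < 1/2"
  shows
    "(\<forall>\<epsilon> xm vm. 0 < \<epsilon> \<and> norm xm = \<epsilon> \<and> norm vm = 1 \<longrightarrow> X1 V \<alpha> \<epsilon> xm vm \<bullet> vm = 0)
     \<and>
     (\<exists>C \<epsilon>0. 0 < C \<and> 0 < \<epsilon>0 \<and>
       (\<forall>\<epsilon> xm vm (x :: real \<Rightarrow> real^2) (v :: real \<Rightarrow> real^2) \<tau>.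
          0 < \<epsilon> \<and> \<epsilon> < \<epsilon>0 \<and> norm xm = \<epsilon> \<and> norm vm = 1 \<and> 0 < \<tau>
          \<and> x 0 = xm \<and> v 0 = vm
          \<and> (\<forall>t\<in>{0..\<tau>}. (x has_vector_derivative v t) (at t within {0..\<tau>}))
          \<and> (\<forall>t\<in>{0..\<tau>}. (v has_vector_derivative Feps V \<alpha> \<epsilon> (x t)) (at t within {0..\<tau>}))
          \<and> (\<forall>t\<in>{0<..<\<tau>}. norm (x t) < \<epsilon>)
          \<and> norm (x \<tau>) = \<epsilon>
          \<longrightarrow>
            \<bar>\<tau> - tau_hat xm vm\<bar> \<le> C * \<epsilon> powr (1 + \<alpha>)
          \<and> norm (X1 V \<alpha> \<epsilon> xm vm) \<le> C * \<epsilon> powr \<alpha>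
          \<and> \<bar>(vec_angle vm (v \<tau>))\<^sup>2 - (norm (X1 V \<alpha> \<epsilon> xm vm))\<^sup>2\<bar> \<le> C * \<epsilon> powr (3 * \<alpha>)
          \<and> norm (v \<tau> - vm - X1 V \<alpha> \<epsilon> xm vm - X21 V \<alpha> \<epsilon> xm vm) \<le> C * \<epsilon> powr (3 * \<alpha>)
          \<and> norm (X21 V \<alpha> \<epsilon> xm vm) \<le> C * \<epsilon> powr (2 * \<alpha>)))"
proof -
  interpret pot V using smooth supp by unfold_locales
  define K where "K = B1 + B2 + L3 + 1"
  have K1: "1 \<le> K" "B1 \<le> K" "B2 \<le> K" "L3 \<le> K" using B_nonneg by (auto simp: K_def)
  have KK: "K \<le> K^3" "K^2 \<le> K^3"
    using power_increasing[of 1 3 K] power_increasing[of 2 3 K] K1 by auto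
  define \<epsilon>0 where "\<epsilon>0 = (1/(64*K)) powr (1/\<alpha>)"
  define C where "C = 4000 * K^3"
  have C0: "0 < C" using K1 by (simp add: C_def)
  have e00: "0 < \<epsilon>0" using K1 by (simp add: \<epsilon>0_def)
  have part1: "\<forall>\<epsilon> xm vm. 0 < \<epsilon> \<and> norm xm = \<epsilon> \<and> norm vm = 1 \<longrightarrow> X1 V \<alpha> \<epsilon> xm vm \<bullet> vm = 0"
    using X1_perp[OF radial] by blast
  have part2: "\<forall>\<epsilon> xm vm (x :: real \<Rightarrow> real^2) (v :: real \<Rightarrow> real^2) \<tau>.
          0 < \<epsilon> \<and> \<epsilon> < \<epsilon>0 \<and> norm xm = \<epsilon> \<and> norm vm = 1 \<and> 0 < \<tau>
          \<and> x 0 = xm \<and> v 0 = vm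
          \<and> (\<forall>t\<in>{0..\<tau>}. (x has_vector_derivative v t) (at t within {0..\<tau>}))
          \<and> (\<forall>t\<in>{0..\<tau>}. (v has_vector_derivative Feps V \<alpha> \<epsilon> (x t)) (at t within {0..\<tau>}))
          \<and> (\<forall>t\<in>{0<..<\<tau>}. norm (x t) < \<epsilon>)
          \<and> norm (x \<tau>) = \<epsilon>
          \<longrightarrow>
            \<bar>\<tau> - tau_hat xm vm\<bar> \<le> C * \<epsilon> powr (1 + \<alpha>)
          \<and> norm (X1 V \<alpha> \<epsilon> xm vm) \<le> C * \<epsilon> powr \<alpha>
          \<and> \<bar>(vec_angle vm (v \<tau>))\<^sup>2 - (norm (X1 V \<alpha> \<epsilon> xm vm))\<^sup>2\<bar> \<le> C * \<epsilon> powr (3 * \<alpha>)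
          \<and> norm (v \<tau> - vm - X1 V \<alpha> \<epsilon> xm vm - X21 V \<alpha> \<epsilon> xm vm) \<le> C * \<epsilon> powr (3 * \<alpha>)
          \<and> norm (X21 V \<alpha> \<epsilon> xm vm) \<le> C * \<epsilon> powr (2 * \<alpha>)"
  proof (intro allI impI)
    fix \<epsilon> xm vm and x v :: "real \<Rightarrow> real^2" and \<tau>
    assume H: "0 < \<epsilon> \<and> \<epsilon> < \<epsilon>0 \<and> norm xm = \<epsilon> \<and> norm vm = 1 \<and> 0 < \<tau>
          \<and> x 0 = xm \<and> v 0 = vm
          \<and> (\<forall>t\<in>{0..\<tau>}. (x has_vector_derivative v t) (at t within {0..\<tau>}))
          \<and> (\<forall>t\<in>{0..\<tau>}. (v has_vector_derivative Feps V \<alpha> \<epsilon> (x t)) (at t within {0..\<tau>}))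
          \<and> (\<forall>t\<in>{0<..<\<tau>}. norm (x t) < \<epsilon>)
          \<and> norm (x \<tau>) = \<epsilon>"
    then have ep: "0 < \<epsilon>" and el: "\<epsilon> < \<epsilon>0" and xm: "norm xm = \<epsilon>" and vm: "norm vm = 1"
      and tp: "0 < \<tau>" and x0: "x 0 = xm" and v0: "v 0 = vm"
      and xd: "\<forall>t\<in>{0..\<tau>}. (x has_vector_derivative v t) (at t within {0..\<tau>})"
      and vd: "\<forall>t\<in>{0..\<tau>}. (v has_vector_derivative Feps V \<alpha> \<epsilon> (x t)) (at t within {0..\<tau>})"
      and ins: "\<forall>t\<in>{0<..<\<tau>}. norm (x t) < \<epsilon>" and xe: "norm (x \<tau>) = \<epsilon>"
      by auto
    define lam where "lam = \<epsilon> powr \<alpha>"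
    define k where "k = K * lam"
    have lam0: "0 < lam" using ep by (simp add: lam_def)
    have k0: "0 < k" using lam0 K1 by (simp add: k_def)
    have "lam < \<epsilon>0 powr \<alpha>" unfolding lam_def using alpha ep el by (intro powr_less_mono2) auto
    also have "\<epsilon>0 powr \<alpha> = 1/(64*K)" using alpha K1 by (simp add: \<epsilon>0_def powr_powr)
    finally have "K * lam < K * (1/(64*K))" using K1 by (intro mult_strict_left_mono) auto
    then have ks: "k \<le> 1/64" using K1 by (simp add: k_def)
    have vd': "\<forall>t\<in>{0..\<tau>}. (v has_vector_derivative Fe \<alpha> \<epsilon> (x t)) (at t within {0..\<tau>})"
      using vd Feps_eq'[OF ep] by simp
    have le1: "c * lam / \<epsilon>^n \<le> k / \<epsilon>^n" if "c \<le> K" for c n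
      using that lam0 ep by (auto simp: k_def intro!: divide_right_mono mult_right_mono)
    interpret Dy: dyn "Fe \<alpha> \<epsilon>" "DFe \<alpha> \<epsilon>" \<epsilon> k xm vm x v \<tau>
    proof
      show "0 < \<epsilon>" "0 < k" "k \<le> 1/64" by (fact ep k0 ks)+
      show "\<And>y. (Fe \<alpha> \<epsilon> has_derivative DFe \<alpha> \<epsilon> y) (at y)" by (rule Fe_deriv)
      show "norm (Fe \<alpha> \<epsilon> y) \<le> k / \<epsilon>" for y
        using Fe_bound[OF ep, of \<alpha> y] le1[OF K1(2), of 1] by (simp add: lam_def)
      show "norm (DFe \<alpha> \<epsilon> y h) \<le> k / \<epsilon>^2 * norm h" for y h
        using DFe_bound[OF ep, of \<alpha> y h] mult_right_mono[OF le1[OF K1(3), of 2] norm_ge_zero[of h]]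
        by (simp add: lam_def)
      show "norm (DFe \<alpha> \<epsilon> y h - DFe \<alpha> \<epsilon> z h) \<le> k / \<epsilon>^3 * norm (y - z) * norm h" for y z h
      proof -
        have "norm (DFe \<alpha> \<epsilon> y h - DFe \<alpha> \<epsilon> z h) \<le> L3 * lam / \<epsilon>^3 * (norm (y - z) * norm h)"
          using DFe_lip[OF ep, of \<alpha> y h z] by (simp add: lam_def mult_ac)
        also have "\<dots> \<le> k / \<epsilon>^3 * (norm (y - z) * norm h)"
          by (intro mult_right_mono le1[OF K1(4)]) auto
        finally show ?thesis by (simp add: mult_ac)
      qed
      show "norm (Fe \<alpha> \<epsilon> y - Fe \<alpha> \<epsilon> z - DFe \<alpha> \<epsilon> z (y - z)) \<le> k / \<epsilon>^3 * (norm (y - z))\<^sup>2" for y z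
        using Fe_taylor[OF ep, of \<alpha> y z] mult_right_mono[OF le1[OF K1(4), of 3] zero_le_power2[of "norm (y - z)"]]
        by (simp add: lam_def)
      show "\<And>y. \<epsilon> \<le> norm y \<Longrightarrow> Fe \<alpha> \<epsilon> y = 0" using Fe_vanish[OF ep] by blast
      show "\<And>y h. \<epsilon> \<le> norm y \<Longrightarrow> DFe \<alpha> \<epsilon> y h = 0" using DFe_vanish[OF ep] by blast
    qed (use xm vm tp x0 v0 xd vd' ins xe in auto)
    note Mn = Dy.dyn_main
    have th_eq: "Dy.th = tau_hat xm vm" by (simp add: Dy.th_def tau_hat_def)
    have frF: "frechet_derivative (Fe \<alpha> \<epsilon>) (at y) = DFe \<alpha> \<epsilon> y" for y
      using frechet_derivative_at[OF Fe_deriv] by simp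
    have X1e: "X1 V \<alpha> \<epsilon> xm vm = integral {0..Dy.th} (\<lambda>s. Fe \<alpha> \<epsilon> (xm + s *\<^sub>R vm))"
      by (simp add: X1_def th_eq Feps_eq'[OF ep])
    have X21e: "X21 V \<alpha> \<epsilon> xm vm = integral {0..Dy.th} (\<lambda>s. integral {0..s} (\<lambda>u. (s - u) *\<^sub>R DFe \<alpha> \<epsilon> (xm + s *\<^sub>R vm) (Fe \<alpha> \<epsilon> (xm + u *\<^sub>R vm))))"
      by (simp add: X21_def th_eq Feps_eq'[OF ep] frF)
    from Mn have m1: "\<bar>\<tau> - tau_hat xm vm\<bar> \<le> 44 * k * \<epsilon>"
      and m2: "norm (X1 V \<alpha> \<epsilon> xm vm) \<le> 2 * k"
      and m3: "norm (v \<tau> - vm) \<le> 4 * k"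
      and m4: "norm (v \<tau> - vm - X1 V \<alpha> \<epsilon> xm vm - X21 V \<alpha> \<epsilon> xm vm) \<le> 4000 * k^3"
      and m5: "norm (X21 V \<alpha> \<epsilon> xm vm) \<le> 8 * k^2"
      unfolding X1e X21e th_eq by auto
    have vt: "norm (v \<tau>) = 1"
      by (rule energy[OF radial ep tp x0 v0 vm xd vd]) (simp add: xe xm)
    have ang: "\<bar>(vec_angle vm (v \<tau>))\<^sup>2 - (norm (v \<tau> - vm))\<^sup>2\<bar> \<le> 8 * (norm (v \<tau> - vm))^4"
      by (rule angle_est[OF vm vt])
    have comb: "\<bar>(vec_angle vm (v \<tau>))\<^sup>2 - (norm (X1 V \<alpha> \<epsilon> xm vm))\<^sup>2\<bar> \<le> 500 * k^3"
      by (rule angle_combine[OF _ ks m3 m2 m5 m4 ang]) (use k0 in simp)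
    have p1: "\<epsilon> powr (1 + \<alpha>) = \<epsilon> * lam" using ep by (simp add: lam_def powr_add)
    have p2: "\<epsilon> powr (2 * \<alpha>) = lam^2" using ep by (simp add: lam_def powr_power)
    have p3: "\<epsilon> powr (3 * \<alpha>) = lam^3" using ep by (simp add: lam_def powr_power)
    have i1: "44 * k * \<epsilon> \<le> C * (\<epsilon> * lam)"
    proof -
      have "44 * k * \<epsilon> = (44 * K) * (\<epsilon> * lam)" by (simp add: k_def)
      also have "\<dots> \<le> C * (\<epsilon> * lam)" using KK K1 ep lam0 by (intro mult_right_mono) (auto simp: C_def)
      finally show ?thesis .
    qed
    have i2: "2 * k \<le> C * lam"
    proof -
      have "2 * k = (2 * K) * lam" by (simp add: k_def)
      also have "\<dots> \<le> C * lam" using KK K1 lam0 by (intro mult_right_mono) (auto simp: C_def)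
      finally show ?thesis .
    qed
    have k3: "k^3 = K^3 * lam^3" by (simp add: k_def power_mult_distrib)
    have i3: "500 * k^3 \<le> C * lam^3" using K1 lam0 by (simp add: k3 C_def)
    have i4: "4000 * k^3 = C * lam^3" by (simp add: k3 C_def)
    have i5: "8 * k^2 \<le> C * lam^2"
    proof -
      have "8 * k^2 = (8 * K^2) * lam^2" by (simp add: k_def power_mult_distrib)
      also have "\<dots> \<le> C * lam^2" using KK K1 lam0 by (intro mult_right_mono) (auto simp: C_def)
      finally show ?thesis .
    qed
    show "\<bar>\<tau> - tau_hat xm vm\<bar> \<le> C * \<epsilon> powr (1 + \<alpha>)
          \<and> norm (X1 V \<alpha> \<epsilon> xm vm) \<le> C * \<epsilon> powr \<alpha>
          \<and> \<bar>(vec_angle vm (v \<tau>))\<^sup>2 - (norm (X1 V \<alpha> \<epsilon> xm vm))\<^sup>2\<bar> \<le> C * \<epsilon> powr (3 * \<alpha>)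
          \<and> norm (v \<tau> - vm - X1 V \<alpha> \<epsilon> xm vm - X21 V \<alpha> \<epsilon> xm vm) \<le> C * \<epsilon> powr (3 * \<alpha>)
          \<and> norm (X21 V \<alpha> \<epsilon> xm vm) \<le> C * \<epsilon> powr (2 * \<alpha>)"
      unfolding p1 p2 p3 lam_def[symmetric] using m1 m2 m4 m5 comb i1 i2 i3 i4 i5 by linarith
  qed
  show ?thesis using part1 part2 C0 e00 by blast
qed

end
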